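(* Let $M$ be a Poisson manifold with a local star product $*$, let $\omega:C^\infty_0(M)[[\lambda]]\to\mathbb C[[\lambda]]$ be a positive $\mathbb C[[\lambda]]$-linear functional, and let $O,O'\subseteq M$ be open. Then: (i) $\mathfrak H_\omega(O)$ is canonically isometric to $\mathcal A_0(O)/\mathcal J_\omega(O)$, where $\mathcal J_\omega(O)=\mathcal A_0(O)\cap\mathcal J_\omega$ and the quotient carries the Hermitian product $\langle[f],[g]\rangle=\omega(\bar f*g)$; the isometry is $[f]\mapsto\psi_f$. (ii) If $O\cap O'=\emptyset$, then $\mathfrak H_\omega(O)$ and $\mathfrak H_\omega(O')$ are orthogonal. (iii) If $O\cap\operatorname{supp}\omega=\emptyset$, then $\mathfrak H_\omega(O)=\{0\}$.
   Context: $C^\infty(M)$ denotes complex-valued smooth functions and $\lambda$ is a formal parameter. A (local) star product $*$ on $M$ is an associative $\mathbb C[[\lambda]]$-bilinear product on $C^\infty(M)[[\lambda]]$ with $f*g=\sum_{r\ge0}\lambda^rM_r(f,g)$ for $f,g\in C^\infty(M)$, where the $M_r$ are local operators, $M_0(f,g)=fg$, $M_1(f,g)-M_1(g,f)=\mathrm i\{f,g\}$, $M_r$ vanishes on constants for $r\ge1$, and $\overline{f*g}=\bar g*\bar f$ ($\bar\lambda=\lambda$). For $f=\sum_r\lambda^rf_r$, $\operatorname{supp}f$ is the closure of $\bigcup_r\operatorname{supp}f_r$; $C^\infty_0(O)[[\lambda]]$ is the set of series all of whose coefficients have compact support in $O$, and $\mathcal A_0(O)=\{f\in C^\infty_0(O)[[\lambda]]:\operatorname{supp}f\subseteq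 O\}$. $\mathbb R[[\lambda]]$ is ordered by: $a>0$ iff its lowest-order nonzero coefficient is positive. $\omega$ is positive if $\omega(\bar f*f)\ge0$ for all $f$. The support of a $\mathbb C[[\lambda]]$-linear functional $\sigma$ on $C^\infty_0(M)[[\lambda]]$ is the complement of the union of all open $U$ with $\sigma|_{C^\infty_0(U)[[\lambda]]}=0$. Gel'fand ideal $\mathcal J_\omega=\{f:\omega(\bar f*f)=0\}$, GNS space $\mathfrak H_\omega=C^\infty_0(M)[[\lambda]]/\mathcal J_\omega$ with classes $\psi_f$ and $\langle\psi_f,\psi_g\rangle=\omega(\bar f*g)$; $\operatorname{supp}\psi_f:=\operatorname{supp}\omega_f$ with $\omega_f(g)=\omega(\bar f*g*f)$; and $\mathfrak H_\omega(O)=\{\psi\in\mathfrak H_\omega:\operatorname{supp}\psi\subseteq O\}$. *)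

theory Defs
  imports "HOL-Analysis.Analysis" "HOL-Computational_Algebra.Formal_Power_Series"
begin

(* Functions on M are 'm => complex; formal series in lambda with function
   coefficients are nat => 'm => complex (n-th coefficient = f n);
   scalars C[[lambda]] are complex fps. *)

definition fsupp :: "('m::topological_space \<Rightarrow> complex) \<Rightarrow> 'm set" where
  "fsupp f = closure {x. f x \<noteq> 0}"

text \<open>Abstract smooth structure: the algebra C of smooth complex functions on a
locally compact Hausdorff space, with smooth Urysohn (bump) functions.\<close>
definition smooth_structure :: "('m::t2_space \<Rightarrow> complex) set \<Rightarrow> bool" where
  "smooth_structure C \<longleftrightarrow>
     (\<forall>x::'m. \<exists>U K. open U \<and> compact K \<and> x \<in> U \<and> U \<subseteq> K) \<and>
     (\<forall>f\<in>C. continuous_on UNIV f) \<and>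
     (\<forall>c. (\<lambda>_. c) \<in> C) \<and>
     (\<forall>f\<in>C. \<forall>g\<in>C. (\<lambda>x. f x + g x) \<in> C \<and> (\<lambda>x. f x * g x) \<in> C) \<and>
     (\<forall>f\<in>C. (\<lambda>x. cnj (f x)) \<in> C) \<and>
     (\<forall>A U. closed A \<and> open U \<and> A \<subseteq> U \<longrightarrow>
        (\<exists>\<phi>\<in>C. (\<forall>x. \<phi> x \<in> \<real> \<and> 0 \<le> Re (\<phi> x) \<and> Re (\<phi> x) \<le> 1) \<and>
               (\<exists>V. open V \<and> A \<subseteq> V \<and> (\<forall>x\<in>V. \<phi> x = 1)) \<and> fsupp \<phi> \<subseteq> U))"

text \<open>Poisson bracket on C (complex-bilinear extension of a real Poisson bracket).\<close>
definition poisson_bracket ::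
  "('m \<Rightarrow> complex) set \<Rightarrow> (('m \<Rightarrow> complex) \<Rightarrow> ('m \<Rightarrow> complex) \<Rightarrow> ('m \<Rightarrow> complex)) \<Rightarrow> bool" where
  "poisson_bracket C pb \<longleftrightarrow>
     (\<forall>f\<in>C. \<forall>g\<in>C. pb f g \<in> C) \<and>
     (\<forall>a b. \<forall>f\<in>C. \<forall>g\<in>C. \<forall>h\<in>C.
        pb (\<lambda>x. a * f x + b * g x) h = (\<lambda>x. a * pb f h x + b * pb g h x)) \<and>
     (\<forall>f\<in>C. \<forall>g\<in>C. pb g f = (\<lambda>x. - pb f g x)) \<and>
     (\<forall>f\<in>C. \<forall>g\<in>C. \<forall>h\<in>C. pb f (\<lambda>x. g x * h x) = (\<lambda>x. pb f g x * h x + g x * pb f h x)) \<and>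
     (\<forall>f\<in>C. \<forall>g\<in>C. \<forall>h\<in>C.
        (\<lambda>x. pb f (pb g h) x + pb g (pb h f) x + pb h (pb f g) x) = (\<lambda>_. 0)) \<and>
     (\<forall>f\<in>C. \<forall>g\<in>C. pb (\<lambda>x. cnj (f x)) (\<lambda>x. cnj (g x)) = (\<lambda>x. cnj (pb f g x)))"

definition ser_in :: "('m \<Rightarrow> complex) set \<Rightarrow> (nat \<Rightarrow> 'm \<Rightarrow> complex) set" where
  "ser_in C = {f. \<forall>n. f n \<in> C}"

definition star ::
  "(nat \<Rightarrow> ('m \<Rightarrow> complex) \<Rightarrow> ('m \<Rightarrow> complex) \<Rightarrow> ('m \<Rightarrow> complex))
   \<Rightarrow> (nat \<Rightarrow> 'm \<Rightarrow> complex) \<Rightarrow> (nat \<Rightarrow> 'm \<Rightarrow> complex) \<Rightarrow> (nat \<Rightarrow> 'm \<Rightarrow> complex)" where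
  "star Mr f g = (\<lambda>n x. \<Sum>r\<le>n. \<Sum>s\<le>n - r. Mr r (f s) (g (n - r - s)) x)"

definition ser_conj :: "(nat \<Rightarrow> 'm \<Rightarrow> complex) \<Rightarrow> (nat \<Rightarrow> 'm \<Rightarrow> complex)" where
  "ser_conj f = (\<lambda>n x. cnj (f n x))"

definition ser_add :: "(nat \<Rightarrow> 'm \<Rightarrow> complex) \<Rightarrow> (nat \<Rightarrow> 'm \<Rightarrow> complex) \<Rightarrow> (nat \<Rightarrow> 'm \<Rightarrow> complex)" where
  "ser_add f g = (\<lambda>n x. f n x + g n x)"

definition ser_diff :: "(nat \<Rightarrow> 'm \<Rightarrow> complex) \<Rightarrow> (nat \<Rightarrow> 'm \<Rightarrow> complex) \<Rightarrow> (nat \<Rightarrow> 'm \<Rightarrow> complex)" where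
  "ser_diff f g = (\<lambda>n x. f n x - g n x)"

definition ser_smul :: "complex fps \<Rightarrow> (nat \<Rightarrow> 'm \<Rightarrow> complex) \<Rightarrow> (nat \<Rightarrow> 'm \<Rightarrow> complex)" where
  "ser_smul a f = (\<lambda>n x. \<Sum>k\<le>n. fps_nth a k * f (n - k) x)"

definition ser_zero :: "nat \<Rightarrow> 'm \<Rightarrow> complex" where
  "ser_zero = (\<lambda>n x. 0)"

definition star_product ::
  "('m::topological_space \<Rightarrow> complex) set \<Rightarrow> (('m \<Rightarrow> complex) \<Rightarrow> ('m \<Rightarrow> complex) \<Rightarrow> ('m \<Rightarrow> complex))
   \<Rightarrow> (nat \<Rightarrow> ('m \<Rightarrow> complex) \<Rightarrow> ('m \<Rightarrow> complex) \<Rightarrow> ('m \<Rightarrow> complex)) \<Rightarrow> bool" where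
  "star_product C pb Mr \<longleftrightarrow>
     (\<forall>r. \<forall>f\<in>C. \<forall>g\<in>C. Mr r f g \<in> C) \<and>
     (\<forall>r a b. \<forall>f\<in>C. \<forall>g\<in>C. \<forall>h\<in>C.
        Mr r (\<lambda>x. a * f x + b * g x) h = (\<lambda>x. a * Mr r f h x + b * Mr r g h x) \<and>
        Mr r h (\<lambda>x. a * f x + b * g x) = (\<lambda>x. a * Mr r h f x + b * Mr r h g x)) \<and>
     (\<forall>r. \<forall>f\<in>C. \<forall>g\<in>C. fsupp (Mr r f g) \<subseteq> fsupp f \<inter> fsupp g) \<and>
     (\<forall>f\<in>C. \<forall>g\<in>C. Mr 0 f g = (\<lambda>x. f x * g x)) \<and>
     (\<forall>f\<in>C. \<forall>g\<in>C. (\<lambda>x. Mr 1 f g x - Mr 1 g f x) = (\<lambda>x. \<i> * pb f g x)) \<and>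
     (\<forall>r\<ge>1. \<forall>f\<in>C. Mr r (\<lambda>_. 1) f = (\<lambda>_. 0) \<and> Mr r f (\<lambda>_. 1) = (\<lambda>_. 0)) \<and>
     (\<forall>r. \<forall>f\<in>C. \<forall>g\<in>C.
        (\<lambda>x. cnj (Mr r f g x)) = Mr r (\<lambda>x. cnj (g x)) (\<lambda>x. cnj (f x))) \<and>
     (\<forall>f\<in>ser_in C. \<forall>g\<in>ser_in C. \<forall>h\<in>ser_in C.
        star Mr (star Mr f g) h = star Mr f (star Mr g h))"

definition ser_supp :: "(nat \<Rightarrow> 'm::topological_space \<Rightarrow> complex) \<Rightarrow> 'm set" where
  "ser_supp f = closure (\<Union>n. fsupp (f n))"

definition C0 :: "('m::topological_space \<Rightarrow> complex) set \<Rightarrow> 'm set \<Rightarrow> (nat \<Rightarrow> 'm \<Rightarrow> complex) set" where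
  "C0 C U = {f \<in> ser_in C. \<forall>n. compact (fsupp (f n)) \<and> fsupp (f n) \<subseteq> U}"

definition A0 :: "('m::topological_space \<Rightarrow> complex) set \<Rightarrow> 'm set \<Rightarrow> (nat \<Rightarrow> 'm \<Rightarrow> complex) set" where
  "A0 C W = {f \<in> C0 C W. ser_supp f \<subseteq> W}"

definition lambda_linear ::
  "('m::topological_space \<Rightarrow> complex) set \<Rightarrow> ((nat \<Rightarrow> 'm \<Rightarrow> complex) \<Rightarrow> complex fps) \<Rightarrow> bool" where
  "lambda_linear C \<sigma> \<longleftrightarrow>
     (\<forall>f\<in>C0 C UNIV. \<forall>g\<in>C0 C UNIV. \<sigma> (ser_add f g) = \<sigma> f + \<sigma> g) \<and>
     (\<forall>a. \<forall>f\<in>C0 C UNIV. \<sigma> (ser_smul a f) = a * \<sigma> f)"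

text \<open>a \<ge> 0 in R[[lambda]] (viewed inside C[[lambda]]).\<close>
definition fps_nonneg :: "complex fps \<Rightarrow> bool" where
  "fps_nonneg a \<longleftrightarrow> (\<forall>n. fps_nth a n \<in> \<real>) \<and> (a \<noteq> 0 \<longrightarrow> 0 < Re (fps_nth a (subdegree a)))"

definition positive_functional ::
  "('m::topological_space \<Rightarrow> complex) set \<Rightarrow> (nat \<Rightarrow> ('m \<Rightarrow> complex) \<Rightarrow> ('m \<Rightarrow> complex) \<Rightarrow> ('m \<Rightarrow> complex))
   \<Rightarrow> ((nat \<Rightarrow> 'm \<Rightarrow> complex) \<Rightarrow> complex fps) \<Rightarrow> bool" where
  "positive_functional C Mr \<omega> \<longleftrightarrow> (\<forall>f\<in>C0 C UNIV. fps_nonneg (\<omega> (star Mr (ser_conj f) f)))"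

definition func_supp ::
  "('m::topological_space \<Rightarrow> complex) set \<Rightarrow> ((nat \<Rightarrow> 'm \<Rightarrow> complex) \<Rightarrow> complex fps) \<Rightarrow> 'm set" where
  "func_supp C \<sigma> = - \<Union>{U. open U \<and> (\<forall>f\<in>C0 C U. \<sigma> f = 0)}"

definition gelfand_ideal where
  "gelfand_ideal C Mr \<omega> = {f \<in> C0 C UNIV. \<omega> (star Mr (ser_conj f) f) = 0}"

definition gns_rel where
  "gns_rel C Mr \<omega> = {(f, g). f \<in> C0 C UNIV \<and> g \<in> C0 C UNIV \<and> ser_diff f g \<in> gelfand_ideal C Mr \<omega>}"

definition gns_space where
  "gns_space C Mr \<omega> = C0 C UNIV // gns_rel C Mr \<omega>"

definition psi where
  "psi C Mr \<omega> f = gns_rel C Mr \<omega> `` {f}"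

definition rep :: "'a set \<Rightarrow> 'a" where
  "rep X = (SOME f. f \<in> X)"

definition gns_inner where
  "gns_inner Mr \<omega> \<Psi> \<Phi> = \<omega> (star Mr (ser_conj (rep \<Psi>)) (rep \<Phi>))"

definition omega_vec where
  "omega_vec Mr \<omega> f = (\<lambda>g. \<omega> (star Mr (star Mr (ser_conj f) g) f))"

definition vec_supp where
  "vec_supp C Mr \<omega> \<Psi> = func_supp C (omega_vec Mr \<omega> (rep \<Psi>))"

definition gns_local where
  "gns_local C Mr \<omega> W = {\<Psi> \<in> gns_space C Mr \<omega>. vec_supp C Mr \<omega> \<Psi> \<subseteq> W}"

definition loc_rel where
  "loc_rel C Mr \<omega> W = {(f, g). f \<in> A0 C W \<and> g \<in> A0 C W \<and>
       ser_diff f g \<in> A0 C W \<inter> gelfand_ideal C Mr \<omega>}"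

definition loc_quot where
  "loc_quot C Mr \<omega> W = A0 C W // loc_rel C Mr \<omega> W"

definition loc_inner where
  "loc_inner Mr \<omega> X Y = \<omega> (star Mr (ser_conj (rep X)) (rep Y))"

end

theory Submission
  imports Defs
begin

lemma fsupp_closed: "closed (fsupp f)"
  by (simp add: fsupp_def)

lemma not_in_fsupp: "x \<notin> fsupp f \<Longrightarrow> f x = 0"
proof -
  have "{x. f x \<noteq> 0} \<subseteq> fsupp f" unfolding fsupp_def by (rule closure_subset)
  then show "x \<notin> fsupp f \<Longrightarrow> f x = 0" by blast
qed

lemma fsupp_empty_iff: "fsupp f = {} \<longleftrightarrow> f = (\<lambda>_. 0)"
  unfolding fsupp_def by (auto simp: fun_eq_iff)

lemma fsupp_zero[simp]: "fsupp (\<lambda>_. 0) = {}"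
  by (simp add: fsupp_empty_iff)

lemma fsupp_mono_set: "{x. f x \<noteq> 0} \<subseteq> {x. g x \<noteq> 0} \<Longrightarrow> fsupp f \<subseteq> fsupp g"
  unfolding fsupp_def by (rule closure_mono)

lemma fsupp_subset_closed: "closed F \<Longrightarrow> {x. f x \<noteq> 0} \<subseteq> F \<Longrightarrow> fsupp f \<subseteq> F"
  unfolding fsupp_def by (simp add: closure_minimal)

lemma fsupp_add: "fsupp (\<lambda>x. f x + g x) \<subseteq> fsupp f \<union> fsupp g"
proof (rule fsupp_subset_closed)
  show "closed (fsupp f \<union> fsupp g)" by (simp add: fsupp_closed closed_Un)
  have "{x. f x \<noteq> 0} \<subseteq> fsupp f" "{x. g x \<noteq> 0} \<subseteq> fsupp g"
    unfolding fsupp_def by (rule closure_subset)+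
  show "{x. f x + g x \<noteq> 0} \<subseteq> fsupp f \<union> fsupp g"
    using not_in_fsupp[of _ f] not_in_fsupp[of _ g] by fastforce
qed

lemma fsupp_sum: "finite I \<Longrightarrow> fsupp (\<lambda>x. \<Sum>i\<in>I. F i x) \<subseteq> (\<Union>i\<in>I. fsupp (F i))"
proof (induction I rule: finite_induct)
  case empty then show ?case by simp
next
  case (insert a I)
  have "fsupp (\<lambda>x. \<Sum>i\<in>insert a I. F i x) = fsupp (\<lambda>x. F a x + (\<Sum>i\<in>I. F i x))"
    using insert by simp
  also have "\<dots> \<subseteq> fsupp (F a) \<union> fsupp (\<lambda>x. \<Sum>i\<in>I. F i x)" by (rule fsupp_add)
  finally show ?case using insert by blast
qed

lemma fsupp_mult: "fsupp (\<lambda>x. f x * g x) \<subseteq> fsupp f \<inter> fsupp g"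
proof -
  have "fsupp (\<lambda>x. f x * g x) \<subseteq> fsupp f" "fsupp (\<lambda>x. f x * g x) \<subseteq> fsupp g"
    by (rule fsupp_mono_set, force)+
  then show ?thesis by blast
qed

lemma fsupp_cnj[simp]: "fsupp (\<lambda>x. cnj (f x)) = fsupp f"
  unfolding fsupp_def by simp


definition shz :: "complex \<Rightarrow> nat \<Rightarrow> (nat \<Rightarrow> 'm \<Rightarrow> complex) \<Rightarrow> (nat \<Rightarrow> 'm \<Rightarrow> complex)" where
  "shz z k f = (\<lambda>n x. if k \<le> n then z * f (n - k) x else 0)"

definition trunc :: "nat \<Rightarrow> (nat \<Rightarrow> 'm \<Rightarrow> complex) \<Rightarrow> (nat \<Rightarrow> 'm \<Rightarrow> complex)" where
  "trunc N f = (\<lambda>n x. if n \<le> N then f n x else 0)"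

lemma sum_if_shift:
  fixes F :: "nat \<Rightarrow> 'a::comm_monoid_add"
  shows "(\<Sum>s\<le>m. if k \<le> s then F s else 0) = (if k \<le> m then \<Sum>s\<le>m-k. F (s+k) else 0)"
proof (induction m)
  case 0 then show ?case by auto
next
  case (Suc m)
  show ?case
  proof (cases "k \<le> m")
    case True
    then have "Suc m - k = Suc (m - k)" by simp
    then show ?thesis using Suc True by (simp add: add.commute)
  next
    case False
    show ?thesis
    proof (cases "k = Suc m")
      case True
      then show ?thesis using Suc False by simp
    next
      case False
      then show ?thesis using Suc \<open>\<not> k \<le> m\<close> by simp
    qed
  qed
qed

lemma sum_if_le:
  fixes H :: "nat \<Rightarrow> 'a::comm_monoid_add"
  shows "(\<Sum>r\<le>n. if k \<le> n - r then H r else 0) = (if k \<le> n then \<Sum>r\<le>n-k. H r else 0)"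
proof (cases "k \<le> n")
  case True
  have "(\<Sum>r\<le>n. if k \<le> n - r then H r else 0) = sum H {r \<in> {..n}. k \<le> n - r}"
    using sum.inter_filter[of "{..n}" H "\<lambda>r. k \<le> n - r"] by simp
  also have "{r \<in> {..n}. k \<le> n - r} = {..n-k}" using True by auto
  finally show ?thesis using True by simp
next
  case False
  then show ?thesis by (auto intro!: sum.neutral)
qed

lemma sum_rev_pair:
  fixes F :: "nat \<Rightarrow> nat \<Rightarrow> 'a::comm_monoid_add"
  shows "(\<Sum>s\<le>m. F s (m - s)) = (\<Sum>s\<le>m. F (m - s) s)"
proof -
  have "(\<Sum>s\<in>{0..m}. F s (m - s)) = (\<Sum>s\<in>{0..m}. F (m + 0 - s) (m - (m + 0 - s)))"
    by (rule sum.atLeastAtMost_rev)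
  also have "\<dots> = (\<Sum>s\<in>{0..m}. F (m - s) s)"
    by (rule sum.cong) auto
  finally show ?thesis by (simp add: atLeast0AtMost)
qed

locale gns_ctx =
  fixes C :: "('m::t2_space \<Rightarrow> complex) set"
    and pb :: "('m \<Rightarrow> complex) \<Rightarrow> ('m \<Rightarrow> complex) \<Rightarrow> ('m \<Rightarrow> complex)"
    and Mr :: "nat \<Rightarrow> ('m \<Rightarrow> complex) \<Rightarrow> ('m \<Rightarrow> complex) \<Rightarrow> ('m \<Rightarrow> complex)"
    and \<omega> :: "(nat \<Rightarrow> 'm \<Rightarrow> complex) \<Rightarrow> complex fps"
  assumes ss: "smooth_structure C"
    and sp: "star_product C pb Mr"
    and ll: "lambda_linear C \<omega>"
    and pf: "positive_functional C Mr \<omega>"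
begin

lemma C_const: "(\<lambda>_. c) \<in> C" using ss by (simp add: smooth_structure_def)
lemma C_add: "f \<in> C \<Longrightarrow> g \<in> C \<Longrightarrow> (\<lambda>x. f x + g x) \<in> C" using ss by (simp add: smooth_structure_def)
lemma C_mult: "f \<in> C \<Longrightarrow> g \<in> C \<Longrightarrow> (\<lambda>x. f x * g x) \<in> C" using ss by (simp add: smooth_structure_def)
lemma C_cnj: "f \<in> C \<Longrightarrow> (\<lambda>x. cnj (f x)) \<in> C" using ss by (simp add: smooth_structure_def)
lemma C_zero: "(\<lambda>_. 0) \<in> C" by (rule C_const)
lemma C_scale: "f \<in> C \<Longrightarrow> (\<lambda>x. c * f x) \<in> C" using C_mult[OF C_const] .
lemma C_sum: "finite I \<Longrightarrow> (\<And>i. i \<in> I \<Longrightarrow> F i \<in> C) \<Longrightarrow> (\<lambda>x. \<Sum>i\<in>I. F i x) \<in> C"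
proof (induction I rule: finite_induct)
  case empty then show ?case by (simp add: C_zero)
next
  case (insert a I) then show ?case using C_add[of "F a" "\<lambda>x. \<Sum>i\<in>I. F i x"] by simp
qed
lemma C_one_minus: "f \<in> C \<Longrightarrow> (\<lambda>x. 1 - f x) \<in> C"
proof -
  assume "f \<in> C"
  then have "(\<lambda>x. 1 + (-1) * f x) \<in> C" by (intro C_add C_const C_scale)
  then show ?thesis by simp
qed

lemma urysohn:
  assumes "closed A" "open U" "A \<subseteq> U"
  obtains \<phi> V where "\<phi> \<in> C" "open V" "A \<subseteq> V" "\<And>x. x \<in> V \<Longrightarrow> \<phi> x = 1" "fsupp \<phi> \<subseteq> U"
proof -
  have H: "\<forall>A U. closed A \<and> open U \<and> A \<subseteq> U \<longrightarrow>
        (\<exists>\<phi>\<in>C. (\<forall>x. \<phi> x \<in> \<real> \<and> 0 \<le> Re (\<phi> x) \<and> Re (\<phi> x) \<le> 1) \<and>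
               (\<exists>V. open V \<and> A \<subseteq> V \<and> (\<forall>x\<in>V. \<phi> x = 1)) \<and> fsupp \<phi> \<subseteq> U)"
    using ss unfolding smooth_structure_def by (elim conjE) assumption
  from H[rule_format, OF conjI[OF assms(1) conjI[OF assms(2,3)]]]
  obtain \<phi> V where "\<phi> \<in> C" "open V" "A \<subseteq> V" "\<forall>x\<in>V. \<phi> x = 1" "fsupp \<phi> \<subseteq> U"
    by blast
  then show ?thesis using that by blast
qed

lemma loc_compact: "\<exists>U K. open U \<and> compact K \<and> (x::'m) \<in> U \<and> U \<subseteq> K"
  using ss[unfolded smooth_structure_def, THEN conjunct1] by (rule spec)

lemmas spc = sp[unfolded star_product_def]
lemmas spc1 = spc[THEN conjunct1]
lemmas spc2 = spc[THEN conjunct2, THEN conjunct1]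
lemmas spc3 = spc[THEN conjunct2, THEN conjunct2, THEN conjunct1]
lemmas spc4 = spc[THEN conjunct2, THEN conjunct2, THEN conjunct2, THEN conjunct1]
lemmas spc6 = spc[THEN conjunct2, THEN conjunct2, THEN conjunct2, THEN conjunct2, THEN conjunct2, THEN conjunct1]
lemmas spc7 = spc[THEN conjunct2, THEN conjunct2, THEN conjunct2, THEN conjunct2, THEN conjunct2, THEN conjunct2, THEN conjunct1]
lemmas spc8 = spc[THEN conjunct2, THEN conjunct2, THEN conjunct2, THEN conjunct2, THEN conjunct2, THEN conjunct2, THEN conjunct2]

lemma Mr_C: "f \<in> C \<Longrightarrow> g \<in> C \<Longrightarrow> Mr r f g \<in> C" using spc1 by blast
lemma Mr_lin_left: "f \<in> C \<Longrightarrow> g \<in> C \<Longrightarrow> h \<in> C \<Longrightarrow>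
   Mr r (\<lambda>x. a * f x + b * g x) h = (\<lambda>x. a * Mr r f h x + b * Mr r g h x)"
  using spc2 by blast
lemma Mr_lin_right: "f \<in> C \<Longrightarrow> g \<in> C \<Longrightarrow> h \<in> C \<Longrightarrow>
   Mr r h (\<lambda>x. a * f x + b * g x) = (\<lambda>x. a * Mr r h f x + b * Mr r h g x)"
  using spc2 by blast
lemma Mr_supp: "f \<in> C \<Longrightarrow> g \<in> C \<Longrightarrow> fsupp (Mr r f g) \<subseteq> fsupp f \<inter> fsupp g"
  using spc3 by blast
lemma Mr_0: "f \<in> C \<Longrightarrow> g \<in> C \<Longrightarrow> Mr 0 f g = (\<lambda>x. f x * g x)"
  using spc4 by blast
lemma Mr_one_left: "r \<ge> 1 \<Longrightarrow> f \<in> C \<Longrightarrow> Mr r (\<lambda>_. 1) f = (\<lambda>_. 0)"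
  using spc6 by blast
lemma Mr_cnj: "f \<in> C \<Longrightarrow> g \<in> C \<Longrightarrow> (\<lambda>x. cnj (Mr r f g x)) = Mr r (\<lambda>x. cnj (g x)) (\<lambda>x. cnj (f x))"
  using spc7 by blast
lemma star_assoc: "f \<in> ser_in C \<Longrightarrow> g \<in> ser_in C \<Longrightarrow> h \<in> ser_in C \<Longrightarrow>
   star Mr (star Mr f g) h = star Mr f (star Mr g h)"
  using spc8 by blast

lemma Mr_add_left: "f \<in> C \<Longrightarrow> g \<in> C \<Longrightarrow> h \<in> C \<Longrightarrow>
   Mr r (\<lambda>x. f x + g x) h = (\<lambda>x. Mr r f h x + Mr r g h x)"
  using Mr_lin_left[of f g h r 1 1] by simp
lemma Mr_add_right: "f \<in> C \<Longrightarrow> g \<in> C \<Longrightarrow> h \<in> C \<Longrightarrow>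
   Mr r h (\<lambda>x. f x + g x) = (\<lambda>x. Mr r h f x + Mr r h g x)"
  using Mr_lin_right[of f g h r 1 1] by simp
lemma Mr_scale_left: "f \<in> C \<Longrightarrow> h \<in> C \<Longrightarrow> Mr r (\<lambda>x. c * f x) h = (\<lambda>x. c * Mr r f h x)"
  using Mr_lin_left[of f f h r c 0] by simp
lemma Mr_scale_right: "f \<in> C \<Longrightarrow> h \<in> C \<Longrightarrow> Mr r h (\<lambda>x. c * f x) = (\<lambda>x. c * Mr r h f x)"
  using Mr_lin_right[of f f h r c 0] by simp
lemma Mr_zero_left: "h \<in> C \<Longrightarrow> Mr r (\<lambda>_. 0) h = (\<lambda>_. 0)"
  using Mr_scale_left[of h h r 0] by simp
lemma Mr_zero_right: "h \<in> C \<Longrightarrow> Mr r h (\<lambda>_. 0) = (\<lambda>_. 0)"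
  using Mr_scale_right[of h h r 0] by simp

lemma Mr_disjoint: "f \<in> C \<Longrightarrow> g \<in> C \<Longrightarrow> fsupp f \<inter> fsupp g = {} \<Longrightarrow> Mr r f g = (\<lambda>_. 0)"
  using Mr_supp[of f g r] by (simp add: fsupp_empty_iff[symmetric])

lemma Mr_local_right: "a \<in> C \<Longrightarrow> b \<in> C \<Longrightarrow> c \<in> C \<Longrightarrow> fsupp a \<inter> fsupp c = {} \<Longrightarrow>
   Mr r a (\<lambda>x. b x + c x) = Mr r a b"
  using Mr_add_right[of b c a r] Mr_disjoint[of a c r] by simp

lemma ser_inD: "f \<in> ser_in C \<Longrightarrow> f n \<in> C" by (simp add: ser_in_def)
lemma ser_inI: "(\<And>n. f n \<in> C) \<Longrightarrow> f \<in> ser_in C" by (simp add: ser_in_def)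

lemma star_nth: "star Mr f g n = (\<lambda>x. \<Sum>r\<le>n. \<Sum>s\<le>n - r. Mr r (f s) (g (n - r - s)) x)"
  by (simp add: star_def)

lemma star_in: "f \<in> ser_in C \<Longrightarrow> g \<in> ser_in C \<Longrightarrow> star Mr f g \<in> ser_in C"
  by (rule ser_inI, unfold star_nth) (intro C_sum Mr_C; blast intro: ser_inD)

lemma add_in: "f \<in> ser_in C \<Longrightarrow> g \<in> ser_in C \<Longrightarrow> ser_add f g \<in> ser_in C"
  by (rule ser_inI, unfold ser_add_def) (intro C_add; blast intro: ser_inD)

lemma conj_in: "f \<in> ser_in C \<Longrightarrow> ser_conj f \<in> ser_in C"
  by (rule ser_inI, unfold ser_conj_def) (intro C_cnj; blast intro: ser_inD)

lemma shz_nth: "shz z k f n = (if k \<le> n then (\<lambda>x. z * f (n - k) x) else (\<lambda>_. 0))"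
  by (auto simp: shz_def)

lemma shz_in: "f \<in> ser_in C \<Longrightarrow> shz z k f \<in> ser_in C"
  by (intro ser_inI) (auto simp: shz_nth C_zero intro: C_scale ser_inD)

lemma zero_in: "ser_zero \<in> ser_in C"
  by (intro ser_inI) (simp add: ser_zero_def C_zero)

lemma trunc_nth: "trunc N f n = (if n \<le> N then f n else (\<lambda>_. 0))"
  by (auto simp: trunc_def)

lemma trunc_in: "f \<in> ser_in C \<Longrightarrow> trunc N f \<in> ser_in C"
  by (intro ser_inI) (simp add: trunc_nth C_zero ser_inD)

lemma star_add_left: "f \<in> ser_in C \<Longrightarrow> g \<in> ser_in C \<Longrightarrow> h \<in> ser_in C \<Longrightarrow>
  star Mr (ser_add f g) h = ser_add (star Mr f h) (star Mr g h)"
  unfolding star_def ser_add_def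
  by (simp add: Mr_add_left[OF ser_inD ser_inD ser_inD] sum.distrib)

lemma star_add_right: "f \<in> ser_in C \<Longrightarrow> g \<in> ser_in C \<Longrightarrow> h \<in> ser_in C \<Longrightarrow>
  star Mr h (ser_add f g) = ser_add (star Mr h f) (star Mr h g)"
  unfolding star_def ser_add_def
  by (simp add: Mr_add_right[OF ser_inD ser_inD ser_inD] sum.distrib)

lemma Mr_shz_left: "f \<in> ser_in C \<Longrightarrow> h \<in> C \<Longrightarrow>
  Mr r (shz z k f s) h x = (if k \<le> s then z * Mr r (f (s - k)) h x else 0)"
  by (simp add: shz_nth Mr_scale_left ser_inD Mr_zero_left)

lemma star_shz_left: "f \<in> ser_in C \<Longrightarrow> g \<in> ser_in C \<Longrightarrow>
  star Mr (shz z k f) g = shz z k (star Mr f g)"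
proof (intro ext)
  fix n x
  assume f: "f \<in> ser_in C" and g: "g \<in> ser_in C"
  have "star Mr (shz z k f) g n x =
     (\<Sum>r\<le>n. \<Sum>s\<le>n - r. if k \<le> s then z * Mr r (f (s - k)) (g (n - (r + s))) x else 0)"
    by (simp add: star_nth Mr_shz_left[OF f ser_inD[OF g]] diff_diff_left)
  also have "\<dots> = (\<Sum>r\<le>n. if k \<le> n - r then (\<Sum>s\<le>n - r - k. z * Mr r (f s) (g (n - k - r - s)) x) else 0)"
    apply (subst sum_if_shift)
    apply (intro sum.cong refl if_cong)
     apply (simp_all add: algebra_simps)
    done
  also have "\<dots> = (if k \<le> n then (\<Sum>r\<le>n - k. \<Sum>s\<le>n - r - k. z * Mr r (f s) (g (n - k - r - s)) x) else 0)"
    by (rule sum_if_le)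
  also have "\<dots> = shz z k (star Mr f g) n x"
    by (simp add: shz_def star_nth sum_distrib_left algebra_simps)
  finally show "star Mr (shz z k f) g n x = shz z k (star Mr f g) n x" .
qed

lemma conj_conj[simp]: "ser_conj (ser_conj f) = f"
  by (simp add: ser_conj_def)

lemma star_conj: "f \<in> ser_in C \<Longrightarrow> g \<in> ser_in C \<Longrightarrow>
  ser_conj (star Mr f g) = star Mr (ser_conj g) (ser_conj f)"
proof (intro ext)
  fix n x
  assume f: "f \<in> ser_in C" and g: "g \<in> ser_in C"
  have c: "cnj (Mr r (f s) (g t) x) = Mr r (ser_conj g t) (ser_conj f s) x" for r s t
    using fun_cong[OF Mr_cnj[OF ser_inD[OF f, of s] ser_inD[OF g, of t], of r], of x]
    by (simp add: ser_conj_def)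
  have "ser_conj (star Mr f g) n x = (\<Sum>r\<le>n. \<Sum>s\<le>n - r. Mr r (ser_conj g (n - r - s)) (ser_conj f s) x)"
    by (simp add: ser_conj_def star_nth c[unfolded ser_conj_def])
  also have "\<dots> = (\<Sum>r\<le>n. \<Sum>s\<le>n - r. Mr r (ser_conj g s) (ser_conj f (n - r - s)) x)"
  proof (rule sum.cong[OF refl])
    fix r assume "r \<in> {..n}"
    show "(\<Sum>s\<le>n - r. Mr r (ser_conj g (n - r - s)) (ser_conj f s) x) =
          (\<Sum>s\<le>n - r. Mr r (ser_conj g s) (ser_conj f (n - r - s)) x)"
      using sum_rev_pair[of "\<lambda>a b. Mr r (ser_conj g b) (ser_conj f a) x" "n - r"] by simp
  qed
  also have "\<dots> = star Mr (ser_conj g) (ser_conj f) n x" by (simp add: star_nth)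
  finally show "ser_conj (star Mr f g) n x = star Mr (ser_conj g) (ser_conj f) n x" .
qed

lemma conj_shz: "ser_conj (shz z k f) = shz (cnj z) k (ser_conj f)"
  by (auto simp: ser_conj_def shz_def fun_eq_iff)

lemma shz_conj_id: "ser_conj (shz (cnj z) k (ser_conj f)) = shz z k f"
  by (auto simp: ser_conj_def shz_def fun_eq_iff)

lemma star_shz_right: "f \<in> ser_in C \<Longrightarrow> g \<in> ser_in C \<Longrightarrow>
  star Mr f (shz z k g) = shz z k (star Mr f g)"
proof -
  assume f: "f \<in> ser_in C" and g: "g \<in> ser_in C"
  have "star Mr f (shz z k g) = ser_conj (ser_conj (star Mr f (shz z k g)))" by simp
  also have "\<dots> = ser_conj (star Mr (shz (cnj z) k (ser_conj g)) (ser_conj f))"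
    by (simp add: star_conj f shz_in g conj_shz)
  also have "\<dots> = ser_conj (shz (cnj z) k (star Mr (ser_conj g) (ser_conj f)))"
    by (simp add: star_shz_left conj_in f g)
  also have "\<dots> = shz z k (ser_conj (star Mr (ser_conj g) (ser_conj f)))"
    by (simp add: conj_shz)
  also have "\<dots> = shz z k (star Mr f g)"
    by (simp add: star_conj conj_in f g)
  finally show ?thesis .
qed

abbreviation "S \<equiv> C0 C UNIV"

lemma C0_iff: "f \<in> C0 C U \<longleftrightarrow> f \<in> ser_in C \<and> (\<forall>n. compact (fsupp (f n)) \<and> fsupp (f n) \<subseteq> U)"
  by (simp add: C0_def)

lemma C0_ser_in: "f \<in> C0 C U \<Longrightarrow> f \<in> ser_in C" by (simp add: C0_iff)
lemma C0_compact: "f \<in> C0 C U \<Longrightarrow> compact (fsupp (f n))" by (simp add: C0_iff)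
lemma C0_sub: "f \<in> C0 C U \<Longrightarrow> fsupp (f n) \<subseteq> U" by (simp add: C0_iff)
lemma C0_S: "f \<in> C0 C U \<Longrightarrow> f \<in> S" by (simp add: C0_iff)
lemma A0_C0: "f \<in> A0 C U \<Longrightarrow> f \<in> C0 C U" by (simp add: A0_def)
lemma A0_supp: "f \<in> A0 C U \<Longrightarrow> ser_supp f \<subseteq> U" by (simp add: A0_def)

lemma compact_sub: "compact K \<Longrightarrow> fsupp h \<subseteq> K \<Longrightarrow> compact (fsupp h)"
  using compact_Int_closed[of K "fsupp h"] fsupp_closed[of h] by (simp add: Int_absorb1)

lemma fsupp_sub_ser_supp: "fsupp (f n) \<subseteq> ser_supp f"
  unfolding ser_supp_def by (rule subset_trans[OF _ closure_subset]) blast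

lemma ser_supp_closed: "closed (ser_supp f)"
  by (simp add: ser_supp_def)

lemma ser_supp_sub: "closed F \<Longrightarrow> (\<And>n. fsupp (f n) \<subseteq> F) \<Longrightarrow> ser_supp f \<subseteq> F"
  unfolding ser_supp_def by (rule closure_minimal) auto

lemma star_fsupp_right: "f \<in> ser_in C \<Longrightarrow> g \<in> ser_in C \<Longrightarrow>
   fsupp (star Mr f g n) \<subseteq> (\<Union>t\<le>n. fsupp (g t))"
proof -
  assume f: "f \<in> ser_in C" and g: "g \<in> ser_in C"
  have "fsupp (star Mr f g n) \<subseteq> (\<Union>r\<le>n. fsupp (\<lambda>x. \<Sum>s\<le>n - r. Mr r (f s) (g (n - r - s)) x))"
    unfolding star_nth by (rule fsupp_sum) simp
  also have "\<dots> \<subseteq> (\<Union>r\<le>n. \<Union>s\<le>n - r. fsupp (Mr r (f s) (g (n - r - s))))"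
    using fsupp_sum[of "{..n - r}" "\<lambda>s. Mr r (f s) (g (n - r - s))" for r] by fastforce
  also have "\<dots> \<subseteq> (\<Union>t\<le>n. fsupp (g t))"
  proof (intro UN_least)
    fix r s assume "r \<in> {..n}" "s \<in> {..n - r}"
    have "fsupp (Mr r (f s) (g (n - r - s))) \<subseteq> fsupp (g (n - r - s))"
      using Mr_supp[OF ser_inD[OF f] ser_inD[OF g]] by blast
    then show "fsupp (Mr r (f s) (g (n - r - s))) \<subseteq> (\<Union>t\<le>n. fsupp (g t))" by force
  qed
  finally show ?thesis .
qed

lemma star_fsupp_left: "f \<in> ser_in C \<Longrightarrow> g \<in> ser_in C \<Longrightarrow>
   fsupp (star Mr f g n) \<subseteq> (\<Union>s\<le>n. fsupp (f s))"
proof -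
  assume f: "f \<in> ser_in C" and g: "g \<in> ser_in C"
  have "fsupp (star Mr f g n) \<subseteq> (\<Union>r\<le>n. fsupp (\<lambda>x. \<Sum>s\<le>n - r. Mr r (f s) (g (n - r - s)) x))"
    unfolding star_nth by (rule fsupp_sum) simp
  also have "\<dots> \<subseteq> (\<Union>r\<le>n. \<Union>s\<le>n - r. fsupp (Mr r (f s) (g (n - r - s))))"
    using fsupp_sum[of "{..n - r}" "\<lambda>s. Mr r (f s) (g (n - r - s))" for r] by fastforce
  also have "\<dots> \<subseteq> (\<Union>s\<le>n. fsupp (f s))"
  proof (intro UN_least)
    fix r s assume "r \<in> {..n}" "s \<in> {..n - r}"
    have "fsupp (Mr r (f s) (g (n - r - s))) \<subseteq> fsupp (f s)"
      using Mr_supp[OF ser_inD[OF f] ser_inD[OF g]] by blast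
    then show "fsupp (Mr r (f s) (g (n - r - s))) \<subseteq> (\<Union>s\<le>n. fsupp (f s))"
      using \<open>s \<in> {..n - r}\<close> by force
  qed
  finally show ?thesis .
qed

lemma compact_UN_fsupp: "(\<And>t. compact (fsupp (g t))) \<Longrightarrow> compact (\<Union>t\<le>(n::nat). fsupp (g t))"
  by (rule compact_UN) auto

lemma star_C0_right: "f \<in> ser_in C \<Longrightarrow> g \<in> C0 C U \<Longrightarrow> star Mr f g \<in> C0 C U"
proof -
  assume f: "f \<in> ser_in C" and g: "g \<in> C0 C U"
  have gi: "g \<in> ser_in C" using C0_ser_in[OF g] .
  show ?thesis unfolding C0_iff
  proof (intro conjI allI star_in f gi)
    fix n
    have s: "fsupp (star Mr f g n) \<subseteq> (\<Union>t\<le>n. fsupp (g t))" by (rule star_fsupp_right[OF f gi])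
    show "compact (fsupp (star Mr f g n))"
      by (rule compact_sub[OF compact_UN_fsupp s]) (rule C0_compact[OF g])
    show "fsupp (star Mr f g n) \<subseteq> U" using s C0_sub[OF g] by blast
  qed
qed

lemma star_C0_left: "f \<in> C0 C U \<Longrightarrow> g \<in> ser_in C \<Longrightarrow> star Mr f g \<in> C0 C U"
proof -
  assume f: "f \<in> C0 C U" and gi: "g \<in> ser_in C"
  have fi: "f \<in> ser_in C" using C0_ser_in[OF f] .
  show ?thesis unfolding C0_iff
  proof (intro conjI allI star_in fi gi)
    fix n
    have s: "fsupp (star Mr f g n) \<subseteq> (\<Union>t\<le>n. fsupp (f t))" by (rule star_fsupp_left[OF fi gi])
    show "compact (fsupp (star Mr f g n))"
      by (rule compact_sub[OF compact_UN_fsupp s]) (rule C0_compact[OF f])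
    show "fsupp (star Mr f g n) \<subseteq> U" using s C0_sub[OF f] by blast
  qed
qed

lemma add_C0: "f \<in> C0 C U \<Longrightarrow> g \<in> C0 C U \<Longrightarrow> ser_add f g \<in> C0 C U"
proof -
  assume f: "f \<in> C0 C U" and g: "g \<in> C0 C U"
  show ?thesis unfolding C0_iff
  proof (intro conjI allI add_in[OF C0_ser_in[OF f] C0_ser_in[OF g]])
    fix n
    have s: "fsupp (ser_add f g n) \<subseteq> fsupp (f n) \<union> fsupp (g n)"
      unfolding ser_add_def by (rule fsupp_add)
    show "compact (fsupp (ser_add f g n))"
      by (rule compact_sub[OF _ s]) (intro compact_Un C0_compact[OF f] C0_compact[OF g])
    show "fsupp (ser_add f g n) \<subseteq> U" using s C0_sub[OF f] C0_sub[OF g] by blast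
  qed
qed

lemma fsupp_shz: "fsupp (shz z k f n) \<subseteq> fsupp (f (n - k))"
proof (cases "k \<le> n")
  case True
  then show ?thesis by (simp add: shz_nth) (rule fsupp_mono_set, auto)
next
  case False
  then show ?thesis by (simp add: shz_nth)
qed

lemma shz_C0: "f \<in> C0 C U \<Longrightarrow> shz z k f \<in> C0 C U"
proof -
  assume f: "f \<in> C0 C U"
  show ?thesis unfolding C0_iff
  proof (intro conjI allI shz_in[OF C0_ser_in[OF f]])
    fix n
    show "compact (fsupp (shz z k f n))"
      by (rule compact_sub[OF _ fsupp_shz]) (rule C0_compact[OF f])
    show "fsupp (shz z k f n) \<subseteq> U" using fsupp_shz C0_sub[OF f] by blast
  qed
qed

lemma fsupp_conj[simp]: "fsupp (ser_conj f n) = fsupp (f n)"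
  by (simp add: ser_conj_def)

lemma conj_C0: "f \<in> C0 C U \<Longrightarrow> ser_conj f \<in> C0 C U"
  unfolding C0_iff using conj_in by auto

lemma fsupp_ser_zero[simp]: "fsupp (ser_zero n) = {}"
  by (simp add: ser_zero_def)

lemma zero_C0: "ser_zero \<in> C0 C U"
  unfolding C0_iff using zero_in by simp

lemma fsupp_trunc: "fsupp (trunc N f n) \<subseteq> fsupp (f n)"
  by (simp add: trunc_nth)

lemma trunc_C0: "f \<in> C0 C U \<Longrightarrow> trunc N f \<in> C0 C U"
proof -
  assume f: "f \<in> C0 C U"
  show ?thesis unfolding C0_iff
  proof (intro conjI allI trunc_in[OF C0_ser_in[OF f]])
    fix n
    show "compact (fsupp (trunc N f n))"
      by (rule compact_sub[OF _ fsupp_trunc]) (rule C0_compact[OF f])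
    show "fsupp (trunc N f n) \<subseteq> U" using fsupp_trunc C0_sub[OF f] by blast
  qed
qed

lemma om_add: "f \<in> S \<Longrightarrow> g \<in> S \<Longrightarrow> \<omega> (ser_add f g) = \<omega> f + \<omega> g"
  using ll unfolding lambda_linear_def by blast

lemma om_smul: "f \<in> S \<Longrightarrow> \<omega> (ser_smul a f) = a * \<omega> f"
  using ll unfolding lambda_linear_def by blast

lemma ser_smul_shz: "ser_smul (fps_const z * fps_X ^ k) f = shz z k f"
proof (intro ext)
  fix n x
  have "ser_smul (fps_const z * fps_X ^ k) f n x = (\<Sum>j\<le>n. if j = k then z * f (n - j) x else 0)"
    unfolding ser_smul_def by (intro sum.cong) auto
  also have "\<dots> = shz z k f n x"
    by (simp add: shz_def)
  finally show "ser_smul (fps_const z * fps_X ^ k) f n x = shz z k f n x" .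
qed

lemma om_shz: "f \<in> S \<Longrightarrow> \<omega> (shz z k f) = fps_const z * fps_X ^ k * \<omega> f"
  using om_smul[of f "fps_const z * fps_X ^ k"] by (simp add: ser_smul_shz)

lemma om_zero: "\<omega> ser_zero = 0"
proof -
  have "ser_add ser_zero ser_zero = (ser_zero :: nat \<Rightarrow> 'm \<Rightarrow> complex)"
    by (simp add: ser_add_def ser_zero_def)
  then have "\<omega> ser_zero = \<omega> ser_zero + \<omega> ser_zero"
    using om_add[OF zero_C0 zero_C0] by simp
  then show ?thesis by simp
qed

lemma om_shz_nth: "f \<in> S \<Longrightarrow> fps_nth (\<omega> (shz z k f)) m = (if m < k then 0 else z * fps_nth (\<omega> f) (m - k))"
  by (simp add: om_shz mult.assoc fps_X_power_mult_nth)

lemma trunc_decomp: "f = ser_add (trunc N f) (shz 1 (Suc N) (\<lambda>k. f (k + Suc N)))"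
  by (auto simp: fun_eq_iff ser_add_def trunc_def shz_def)

lemma tail_C0: "f \<in> C0 C U \<Longrightarrow> (\<lambda>k. f (k + Suc N)) \<in> C0 C U"
  unfolding C0_iff ser_in_def by auto

lemma om_trunc: "f \<in> S \<Longrightarrow> fps_nth (\<omega> f) N = fps_nth (\<omega> (trunc N f)) N"
proof -
  assume f: "f \<in> S"
  define t where "t = (\<lambda>k. f (k + Suc N))"
  have t: "t \<in> S" unfolding t_def by (rule tail_C0[OF f])
  have e: "\<omega> f = \<omega> (trunc N f) + \<omega> (shz 1 (Suc N) t)"
    unfolding t_def by (subst trunc_decomp[of f N]) (intro om_add trunc_C0 shz_C0 tail_C0 f)
  have "fps_nth (\<omega> (shz 1 (Suc N) t)) N = 0" by (simp add: om_shz_nth[OF t])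
  then show ?thesis by (simp add: e)
qed

lemma om_agree: "f \<in> S \<Longrightarrow> g \<in> S \<Longrightarrow> (\<And>k. k \<le> N \<Longrightarrow> f k = g k) \<Longrightarrow> fps_nth (\<omega> f) N = fps_nth (\<omega> g) N"
proof -
  assume f: "f \<in> S" and g: "g \<in> S" and e: "\<And>k. k \<le> N \<Longrightarrow> f k = g k"
  have "trunc N f = trunc N g" using e by (auto simp: trunc_def fun_eq_iff)
  then show ?thesis using om_trunc[OF f] om_trunc[OF g] by simp
qed

lemma star_agree: "(\<And>s. s \<le> N \<Longrightarrow> f s = f' s) \<Longrightarrow> (\<And>t. t \<le> N \<Longrightarrow> g t = g' t) \<Longrightarrow> k \<le> N \<Longrightarrow>
   star Mr f g k = star Mr f' g' k"
  unfolding star_nth by (intro ext sum.cong refl) auto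

lemma fps_nonneg_first:
  assumes "fps_nonneg P" "\<And>i. i < m \<Longrightarrow> fps_nth P i = 0"
  shows "fps_nth P m \<in> \<real> \<and> 0 \<le> Re (fps_nth P m)"
proof (cases "fps_nth P m = 0")
  case True then show ?thesis by simp
next
  case False
  then have "P \<noteq> 0" by auto
  have "subdegree P = m" by (rule subdegreeI[OF False assms(2)])
  then show ?thesis using assms(1) \<open>P \<noteq> 0\<close> unfolding fps_nonneg_def by auto
qed

lemma pos: "f \<in> S \<Longrightarrow> fps_nonneg (\<omega> (star Mr (ser_conj f) f))"
  using pf unfolding positive_functional_def by blast

lemma conj_add: "ser_conj (ser_add a b) = ser_add (ser_conj a) (ser_conj b)"
  by (simp add: ser_conj_def ser_add_def)

lemma star_add_add: "a1 \<in> ser_in C \<Longrightarrow> a2 \<in> ser_in C \<Longrightarrow> b1 \<in> ser_in C \<Longrightarrow> b2 \<in> ser_in C \<Longrightarrow>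
  star Mr (ser_add a1 a2) (ser_add b1 b2) =
  ser_add (ser_add (star Mr a1 b1) (star Mr a1 b2)) (ser_add (star Mr a2 b1) (star Mr a2 b2))"
  by (subst star_add_left) (simp_all add: star_add_right add_in)

lemma om_expand:
  assumes j: "j \<in> S" and g: "g \<in> S"
  shows "\<omega> (star Mr (ser_conj (ser_add j (shz z k g))) (ser_add j (shz z k g))) =
     \<omega> (star Mr (ser_conj j) j) + \<omega> (shz z k (star Mr (ser_conj j) g)) +
     (\<omega> (shz (cnj z) k (star Mr (ser_conj g) j)) + \<omega> (shz z k (shz (cnj z) k (star Mr (ser_conj g) g))))"
proof -
  have ji: "j \<in> ser_in C" and gi: "g \<in> ser_in C" using j g by (auto intro: C0_ser_in)
  have cj: "ser_conj j \<in> ser_in C" and cg: "ser_conj g \<in> ser_in C" using ji gi by (auto intro: conj_in)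
  have e: "star Mr (ser_conj (ser_add j (shz z k g))) (ser_add j (shz z k g)) =
     ser_add (ser_add (star Mr (ser_conj j) j) (shz z k (star Mr (ser_conj j) g)))
             (ser_add (shz (cnj z) k (star Mr (ser_conj g) j)) (shz z k (shz (cnj z) k (star Mr (ser_conj g) g))))"
    by (simp add: conj_add conj_shz star_add_add cj cg ji gi shz_in star_shz_left star_shz_right)
  have m1: "star Mr (ser_conj j) j \<in> S" "star Mr (ser_conj j) g \<in> S"
    "star Mr (ser_conj g) j \<in> S" "star Mr (ser_conj g) g \<in> S"
    using star_C0_right cj cg j g by blast+
  show ?thesis unfolding e
    by (simp add: om_add add_C0 shz_C0 m1)
qed

lemma om_expand_nth:
  assumes j: "j \<in> S" and g: "g \<in> S"
  shows "fps_nth (\<omega> (star Mr (ser_conj (ser_add j (shz z k g))) (ser_add j (shz z k g)))) m =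
     fps_nth (\<omega> (star Mr (ser_conj j) j)) m +
     (if m < k then 0 else z * fps_nth (\<omega> (star Mr (ser_conj j) g)) (m - k)) +
     ((if m < k then 0 else cnj z * fps_nth (\<omega> (star Mr (ser_conj g) j)) (m - k)) +
      (if m < k then 0 else z * (if m - k < k then 0 else cnj z * fps_nth (\<omega> (star Mr (ser_conj g) g)) (m - k - k))))"
proof -
  have ji: "j \<in> ser_in C" and gi: "g \<in> ser_in C" using j g by (auto intro: C0_ser_in)
  have cj: "ser_conj j \<in> ser_in C" and cg: "ser_conj g \<in> ser_in C" using ji gi by (auto intro: conj_in)
  have m1: "star Mr (ser_conj j) j \<in> S" "star Mr (ser_conj j) g \<in> S"
    "star Mr (ser_conj g) j \<in> S" "star Mr (ser_conj g) g \<in> S"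
    using star_C0_right cj cg j g by blast+
  show ?thesis unfolding om_expand[OF j g] fps_add_nth
    by (simp only: om_shz_nth m1 shz_C0)
qed

lemma cs_core:
  assumes j: "j \<in> S" and jj: "\<omega> (star Mr (ser_conj j) j) = 0" and g: "g \<in> S"
  shows "\<omega> (star Mr (ser_conj j) g) = 0 \<and> \<omega> (star Mr (ser_conj g) j) = 0"
proof (rule ccontr)
  define c where "c = \<omega> (star Mr (ser_conj j) g)"
  define c' where "c' = \<omega> (star Mr (ser_conj g) j)"
  assume "\<not> (\<omega> (star Mr (ser_conj j) g) = 0 \<and> \<omega> (star Mr (ser_conj g) j) = 0)"
  then have "\<exists>n. fps_nth c n \<noteq> 0 \<or> fps_nth c' n \<noteq> 0"
    unfolding c_def c'_def by (auto simp: fps_eq_iff)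
  define d where "d = (LEAST n. fps_nth c n \<noteq> 0 \<or> fps_nth c' n \<noteq> 0)"
  have dnz: "fps_nth c d \<noteq> 0 \<or> fps_nth c' d \<noteq> 0"
    unfolding d_def by (rule LeastI_ex) fact
  have below: "fps_nth c i = 0 \<and> fps_nth c' i = 0" if "i < d" for i
    using not_less_Least[OF that[unfolded d_def]] by blast
  have key: "z * fps_nth c d + cnj z * fps_nth c' d \<in> \<real> \<and> 0 \<le> Re (z * fps_nth c d + cnj z * fps_nth c' d)" for z
  proof -
    define k where "k = Suc d"
    let ?u = "ser_add j (shz z k g)"
    have u: "?u \<in> S" by (intro add_C0 shz_C0 j g)
    have P: "fps_nonneg (\<omega> (star Mr (ser_conj ?u) ?u))" by (rule pos[OF u])
    have E: "fps_nth (\<omega> (star Mr (ser_conj ?u) ?u)) m =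
     (if m < k then 0 else z * fps_nth c (m - k)) +
     ((if m < k then 0 else cnj z * fps_nth c' (m - k)) +
      (if m < k then 0 else z * (if m - k < k then 0 else cnj z * fps_nth (\<omega> (star Mr (ser_conj g) g)) (m - k - k))))" for m
      unfolding om_expand_nth[OF j g] c_def c'_def jj by simp
    have Z: "fps_nth (\<omega> (star Mr (ser_conj ?u) ?u)) i = 0" if "i < k + d" for i
    proof (cases "i < k")
      case True then show ?thesis by (simp add: E)
    next
      case False
      then have "i - k < d" "i - k < k" using that by (simp_all add: k_def)
      then show ?thesis using below[of "i - k"] False by (simp add: E)
    qed
    have "fps_nth (\<omega> (star Mr (ser_conj ?u) ?u)) (k + d) = z * fps_nth c d + cnj z * fps_nth c' d"
      unfolding E by (simp add: k_def)
    moreover have "fps_nth (\<omega> (star Mr (ser_conj ?u) ?u)) (k + d) \<in> \<real> \<and>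
        0 \<le> Re (fps_nth (\<omega> (star Mr (ser_conj ?u) ?u)) (k + d))"
      by (rule fps_nonneg_first[OF P]) (rule Z)
    ultimately show ?thesis by simp
  qed
  define a where "a = fps_nth c d"
  define b where "b = fps_nth c' d"
  have k1: "a + b \<in> \<real>" "0 \<le> Re (a + b)" using key[of 1] by (simp_all add: a_def b_def)
  have k2: "0 \<le> - Re (a + b)" using key[of "-1"] by (simp add: a_def b_def)
  have k3: "\<i> * a - \<i> * b \<in> \<real>" "0 \<le> Re (\<i> * a - \<i> * b)" using key[of "\<i>"] by (simp_all add: a_def b_def)
  have k4: "0 \<le> - Re (\<i> * a - \<i> * b)" using key[of "-\<i>"] by (simp add: a_def b_def)
  have "a + b = 0" using k1 k2 by (simp add: complex_eq_iff complex_is_Real_iff)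
  moreover have "\<i> * a - \<i> * b = 0" using k3 k4 by (simp only: complex_eq_iff complex_is_Real_iff) simp
  ultimately have "a = 0" "b = 0" by (auto simp: complex_eq_iff)
  then show False using dnz by (simp add: a_def b_def)
qed

abbreviation "J \<equiv> gelfand_ideal C Mr \<omega>"

lemma J_iff: "j \<in> J \<longleftrightarrow> j \<in> S \<and> \<omega> (star Mr (ser_conj j) j) = 0"
  by (simp add: gelfand_ideal_def)

lemma J_S: "j \<in> J \<Longrightarrow> j \<in> S" by (simp add: J_iff)

lemma cs1: "j \<in> J \<Longrightarrow> h \<in> S \<Longrightarrow> \<omega> (star Mr (ser_conj j) h) = 0"
  using cs_core[of j h] by (simp add: J_iff)

lemma cs2: "j \<in> J \<Longrightarrow> h \<in> S \<Longrightarrow> \<omega> (star Mr h j) = 0"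
  using cs_core[of j "ser_conj h"] conj_C0[of h] by (simp add: J_iff)

lemma J_add: "j1 \<in> J \<Longrightarrow> j2 \<in> J \<Longrightarrow> ser_add j1 j2 \<in> J"
proof -
  assume a: "j1 \<in> J" "j2 \<in> J"
  then have s: "j1 \<in> S" "j2 \<in> S" by (auto simp: J_iff)
  then have i: "j1 \<in> ser_in C" "j2 \<in> ser_in C" "ser_conj j1 \<in> ser_in C" "ser_conj j2 \<in> ser_in C"
    by (auto intro: C0_ser_in conj_in)
  have m: "star Mr (ser_conj a) b \<in> S" if "a \<in> S" "b \<in> S" for a b
    using that by (intro star_C0_right conj_in C0_ser_in)
  have "\<omega> (star Mr (ser_conj (ser_add j1 j2)) (ser_add j1 j2)) = 0"
    unfolding conj_add star_add_add[OF i(3,4,1,2)]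
    by (simp add: om_add add_C0 m s cs1 a)
  then show ?thesis using add_C0[OF s] by (simp add: J_iff)
qed

lemma J_shz: "j \<in> J \<Longrightarrow> shz z k j \<in> J"
proof -
  assume a: "j \<in> J"
  then have s: "j \<in> S" by (simp add: J_iff)
  then have i: "j \<in> ser_in C" "ser_conj j \<in> ser_in C" by (auto intro: C0_ser_in conj_in)
  have m: "star Mr (ser_conj j) j \<in> S" using s by (intro star_C0_right conj_in C0_ser_in)
  have "\<omega> (star Mr (ser_conj (shz z k j)) (shz z k j)) = 0"
    unfolding conj_shz
    by (simp add: star_shz_left star_shz_right i shz_in om_shz shz_C0 m a[unfolded J_iff])
  then show ?thesis using shz_C0[OF s] by (simp add: J_iff)
qed

lemma J_zero: "ser_zero \<in> J"
proof -
  have "star Mr (ser_conj ser_zero) ser_zero = (ser_zero :: nat \<Rightarrow> 'm \<Rightarrow> complex)"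
    by (simp add: star_def ser_conj_def ser_zero_def Mr_zero_left C_zero)
  then show ?thesis by (simp add: J_iff zero_C0 om_zero)
qed

lemma diff_eq: "ser_diff f g = ser_add f (shz (-1) 0 g)"
  by (simp add: ser_diff_def ser_add_def shz_def)

lemma diff_self: "ser_diff f f = ser_zero"
  by (simp add: ser_diff_def ser_zero_def)

lemma diff_swap: "ser_diff g f = shz (-1) 0 (ser_diff f g)"
  by (simp add: ser_diff_def shz_def)

lemma diff_trans: "ser_diff f h = ser_add (ser_diff f g) (ser_diff g h)"
  by (simp add: ser_diff_def ser_add_def)

lemma add_diff: "f' = ser_add f (ser_diff f' f)"
  by (simp add: ser_diff_def ser_add_def)

abbreviation "R \<equiv> gns_rel C Mr \<omega>"

lemma R_iff: "(f, g) \<in> R \<longleftrightarrow> f \<in> S \<and> g \<in> S \<and> ser_diff f g \<in> J"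
  by (simp add: gns_rel_def)

lemma R_equiv: "equiv S R"
proof (rule equivI)
  show "R \<subseteq> S \<times> S" by (auto simp: R_iff)
  show "refl_on S R" by (auto simp: refl_on_def R_iff diff_self J_zero)
  show "sym R"
  proof (rule symI)
    fix a b assume "(a, b) \<in> R"
    then show "(b, a) \<in> R" unfolding R_iff diff_swap[of b a] using J_shz by blast
  qed
  show "trans R"
  proof (rule transI)
    fix a b c assume "(a, b) \<in> R" "(b, c) \<in> R"
    then show "(a, c) \<in> R" unfolding R_iff diff_trans[of a c b] using J_add by blast
  qed
qed

lemma R_sym: "(f, g) \<in> R \<Longrightarrow> (g, f) \<in> R"
  using R_equiv unfolding equiv_def sym_def by blast

lemma R_decomp: "(f, f') \<in> R \<Longrightarrow> \<exists>j\<in>J. f' = ser_add f j"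
  using R_sym[of f f'] add_diff[of f' f] by (auto simp: R_iff)

lemma inner_inv:
  assumes "(f, f') \<in> R" "(g, g') \<in> R"
  shows "\<omega> (star Mr (ser_conj f') g') = \<omega> (star Mr (ser_conj f) g)"
proof -
  obtain j k where j: "j \<in> J" "f' = ser_add f j" and k: "k \<in> J" "g' = ser_add g k"
    using R_decomp assms by blast
  have f: "f \<in> S" and g: "g \<in> S" using assms by (auto simp: R_iff)
  have js: "j \<in> S" "k \<in> S" using j k by (auto simp: J_iff)
  have i: "ser_conj f \<in> ser_in C" "ser_conj j \<in> ser_in C" "g \<in> ser_in C" "k \<in> ser_in C"
    using f g js by (auto intro: C0_ser_in conj_in)
  have m: "star Mr (ser_conj a) b \<in> S" if "a \<in> S" "b \<in> S" for a b
    using that by (intro star_C0_right conj_in C0_ser_in)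
  show ?thesis
    unfolding j(2) k(2) conj_add star_add_add[OF i]
    by (simp add: om_add add_C0 m f g js cs1 j(1) k(1) cs2 conj_C0)
qed

lemma omega_vec_inv:
  assumes "(f, f') \<in> R" "g \<in> ser_in C"
  shows "omega_vec Mr \<omega> f' g = omega_vec Mr \<omega> f g"
proof -
  obtain j where j: "j \<in> J" "f' = ser_add f j"
    using R_decomp assms by blast
  have f: "f \<in> S" using assms by (auto simp: R_iff)
  have js: "j \<in> S" using j by (auto simp: J_iff)
  have i: "ser_conj f \<in> ser_in C" "ser_conj j \<in> ser_in C" "f \<in> ser_in C" "j \<in> ser_in C"
    using f js by (auto intro: C0_ser_in conj_in)
  have fg: "star Mr (ser_conj f) g \<in> S" by (intro star_C0_left conj_C0 f assms(2))
  have jg: "star Mr (ser_conj j) g \<in> ser_in C" by (intro star_in i assms(2))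
  have gf: "star Mr g f \<in> S" "star Mr g j \<in> S" by (intro star_C0_right assms(2) f js)+
  have e1: "star Mr (star Mr (ser_conj j) g) f = star Mr (ser_conj j) (star Mr g f)"
    by (rule star_assoc) (intro i assms(2))+
  have e2: "star Mr (star Mr (ser_conj j) g) j = star Mr (ser_conj j) (star Mr g j)"
    by (rule star_assoc) (intro i assms(2))+
  have m: "star Mr (star Mr (ser_conj f) g) f \<in> S" "star Mr (star Mr (ser_conj f) g) j \<in> S"
     "star Mr (star Mr (ser_conj j) g) f \<in> S" "star Mr (star Mr (ser_conj j) g) j \<in> S"
    by (intro star_C0_right star_in i assms(2) f js)+
  show ?thesis
    unfolding omega_vec_def j(2) conj_add star_add_left[OF i(1,2) assms(2)]
    unfolding star_add_add[OF star_in[OF i(1) assms(2)] jg i(3,4)]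
  proof -
    have z1: "\<omega> (star Mr (star Mr (ser_conj f) g) j) = 0" by (rule cs2[OF j(1) fg])
    have z2: "\<omega> (star Mr (star Mr (ser_conj j) g) f) = 0" unfolding e1 by (rule cs1[OF j(1) gf(1)])
    have z3: "\<omega> (star Mr (star Mr (ser_conj j) g) j) = 0" unfolding e2 by (rule cs1[OF j(1) gf(2)])
    show "\<omega> (ser_add (ser_add (star Mr (star Mr (ser_conj f) g) f) (star Mr (star Mr (ser_conj f) g) j))
      (ser_add (star Mr (star Mr (ser_conj j) g) f) (star Mr (star Mr (ser_conj j) g) j))) =
      \<omega> (star Mr (star Mr (ser_conj f) g) f)"
      by (simp only: om_add add_C0 m) (simp add: z1 z2 z3)
  qed
qed

lemma func_supp_cong:
  assumes "\<And>g. g \<in> ser_in C \<Longrightarrow> \<sigma> g = \<tau> g"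
  shows "func_supp C \<sigma> = func_supp C \<tau>"
proof -
  have "{U. open U \<and> (\<forall>f\<in>C0 C U. \<sigma> f = 0)} = {U. open U \<and> (\<forall>f\<in>C0 C U. \<tau> f = 0)}"
    using assms C0_ser_in by metis
  then show ?thesis by (simp add: func_supp_def)
qed

lemma psi_self: "f \<in> S \<Longrightarrow> f \<in> psi C Mr \<omega> f"
  unfolding psi_def by (rule equiv_class_self[OF R_equiv])

lemma rep_psi: "f \<in> S \<Longrightarrow> (f, rep (psi C Mr \<omega> f)) \<in> R"
proof -
  assume f: "f \<in> S"
  have "rep (psi C Mr \<omega> f) \<in> psi C Mr \<omega> f"
    unfolding rep_def by (rule someI[where P="\<lambda>x. x \<in> psi C Mr \<omega> f"]) (rule psi_self[OF f])
  then show ?thesis by (simp add: psi_def)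
qed

lemma gns_inner_psi: "f \<in> S \<Longrightarrow> g \<in> S \<Longrightarrow>
   gns_inner Mr \<omega> (psi C Mr \<omega> f) (psi C Mr \<omega> g) = \<omega> (star Mr (ser_conj f) g)"
  unfolding gns_inner_def by (rule inner_inv[OF rep_psi rep_psi])

lemma vec_supp_psi: "f \<in> S \<Longrightarrow> vec_supp C Mr \<omega> (psi C Mr \<omega> f) = func_supp C (omega_vec Mr \<omega> f)"
  unfolding vec_supp_def by (rule func_supp_cong) (rule omega_vec_inv[OF rep_psi])

lemma psi_space: "f \<in> S \<Longrightarrow> psi C Mr \<omega> f \<in> gns_space C Mr \<omega>"
  unfolding psi_def gns_space_def by (rule quotientI)

lemma space_psi: "\<Psi> \<in> gns_space C Mr \<omega> \<Longrightarrow> \<exists>f\<in>S. \<Psi> = psi C Mr \<omega> f"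
  unfolding psi_def gns_space_def by (erule quotientE) blast

lemma psi_eq_iff: "f \<in> S \<Longrightarrow> g \<in> S \<Longrightarrow> psi C Mr \<omega> f = psi C Mr \<omega> g \<longleftrightarrow> (f, g) \<in> R"
  unfolding psi_def by (rule eq_equiv_class_iff[OF R_equiv])

lemma ser_zero_iff: "f = ser_zero \<longleftrightarrow> (\<forall>n. fsupp (f n) = {})"
  by (auto simp: ser_zero_def fsupp_empty_iff fun_eq_iff)

lemma good_union:
  fixes \<sigma> :: "(nat \<Rightarrow> 'm \<Rightarrow> complex) \<Rightarrow> complex fps"
  assumes add: "\<And>g h. g \<in> S \<Longrightarrow> h \<in> S \<Longrightarrow> \<sigma> (ser_add g h) = \<sigma> g + \<sigma> h"
    and o1: "open W1" and o2: "open W2"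
    and g1: "\<forall>g\<in>A0 C W1. \<sigma> g = 0" and g2: "\<forall>g\<in>A0 C W2. \<sigma> g = 0"
  shows "\<forall>g\<in>A0 C (W1 \<union> W2). \<sigma> g = 0"
proof
  fix g assume g: "g \<in> A0 C (W1 \<union> W2)"
  have gC: "g \<in> C0 C (W1 \<union> W2)" and gs: "ser_supp g \<subseteq> W1 \<union> W2" using g by (auto simp: A0_def)
  have gi: "g \<in> ser_in C" using C0_ser_in[OF gC] .
  define A where "A = ser_supp g \<inter> - W2"
  have cA: "closed A" unfolding A_def using o2 by (intro closed_Int ser_supp_closed) (simp add: closed_Compl)
  have AW: "A \<subseteq> W1" using gs by (auto simp: A_def)
  obtain \<phi> V where phi: "\<phi> \<in> C" "open V" "A \<subseteq> V" "\<And>x. x \<in> V \<Longrightarrow> \<phi> x = 1" "fsupp \<phi> \<subseteq> W1"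
    using urysohn[OF cA o1 AW] by blast
  define h1 where "h1 = (\<lambda>n x. \<phi> x * g n x)"
  define h2 where "h2 = (\<lambda>n x. (1 - \<phi> x) * g n x)"
  have dec: "g = ser_add h1 h2" by (simp add: h1_def h2_def ser_add_def fun_eq_iff algebra_simps)
  have f1: "fsupp (h1 n) \<subseteq> fsupp \<phi> \<inter> fsupp (g n)" for n
    unfolding h1_def by (rule fsupp_mult)
  have fV: "fsupp (\<lambda>x. 1 - \<phi> x) \<subseteq> - V"
    by (rule fsupp_subset_closed) (use phi(2,4) in \<open>auto simp: closed_Compl\<close>)
  have f2: "fsupp (h2 n) \<subseteq> - V \<inter> ser_supp g" for n
    using fsupp_mult[of "\<lambda>x. 1 - \<phi> x" "g n"] fV fsupp_sub_ser_supp[of g n] unfolding h2_def by blast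
  have VW: "- V \<inter> ser_supp g \<subseteq> W2" using phi(3) by (auto simp: A_def)
  have h1i: "h1 \<in> ser_in C" unfolding h1_def by (intro ser_inI C_mult phi(1) ser_inD[OF gi])
  have h2i: "h2 \<in> ser_in C" unfolding h2_def by (intro ser_inI C_mult C_one_minus phi(1) ser_inD[OF gi])
  have h1A: "h1 \<in> A0 C W1"
    unfolding A0_def C0_iff
  proof (intro CollectI conjI allI h1i)
    fix n
    have "fsupp (h1 n) \<subseteq> fsupp (g n)" using f1 by blast
    then show "compact (fsupp (h1 n))" by (rule compact_sub[OF C0_compact[OF gC]])
    show "fsupp (h1 n) \<subseteq> W1" using f1 phi(5) by blast
    show "ser_supp h1 \<subseteq> W1"
      using ser_supp_sub[OF fsupp_closed, of h1 \<phi>] f1 phi(5) by blast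
  qed
  have h2A: "h2 \<in> A0 C W2"
    unfolding A0_def C0_iff
  proof (intro CollectI conjI allI h2i)
    fix n
    have "fsupp (h2 n) \<subseteq> fsupp (g n)"
      using fsupp_mult[of "\<lambda>x. 1 - \<phi> x" "g n"] unfolding h2_def by blast
    then show "compact (fsupp (h2 n))" by (rule compact_sub[OF C0_compact[OF gC]])
    show "fsupp (h2 n) \<subseteq> W2" using f2 VW by blast
    have "closed (- V \<inter> ser_supp g)" using phi(2) by (intro closed_Int ser_supp_closed) (simp add: closed_Compl)
    then show "ser_supp h2 \<subseteq> W2"
      using ser_supp_sub[of "- V \<inter> ser_supp g" h2] f2 VW by blast
  qed
  have "\<sigma> g = \<sigma> h1 + \<sigma> h2" unfolding dec
    by (rule add) (intro C0_S[OF A0_C0[OF h1A]] C0_S[OF A0_C0[OF h2A]])+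
  then show "\<sigma> g = 0" using g1 g2 h1A h2A by simp
qed

lemma sigma_zero:
  fixes \<sigma> :: "(nat \<Rightarrow> 'm \<Rightarrow> complex) \<Rightarrow> complex fps"
  assumes add: "\<And>g h. g \<in> S \<Longrightarrow> h \<in> S \<Longrightarrow> \<sigma> (ser_add g h) = \<sigma> g + \<sigma> h"
  shows "\<sigma> ser_zero = 0"
proof -
  have "ser_add ser_zero ser_zero = (ser_zero :: nat \<Rightarrow> 'm \<Rightarrow> complex)"
    by (simp add: ser_add_def ser_zero_def)
  then have "\<sigma> ser_zero = \<sigma> ser_zero + \<sigma> ser_zero"
    using add[OF zero_C0 zero_C0] by simp
  then show ?thesis by simp
qed

lemma good_Union:
  fixes \<sigma> :: "(nat \<Rightarrow> 'm \<Rightarrow> complex) \<Rightarrow> complex fps"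
  assumes add: "\<And>g h. g \<in> S \<Longrightarrow> h \<in> S \<Longrightarrow> \<sigma> (ser_add g h) = \<sigma> g + \<sigma> h"
    and "finite F" and "\<And>W. W \<in> F \<Longrightarrow> open W \<and> (\<forall>g\<in>A0 C W. \<sigma> g = 0)"
  shows "\<forall>g\<in>A0 C (\<Union>F). \<sigma> g = 0"
  using assms(2,3)
proof (induction F rule: finite_induct)
  case empty
  show ?case
  proof
    fix g assume "g \<in> A0 C (\<Union>{})"
    then have "ser_supp g \<subseteq> {}" by (simp add: A0_def)
    then have "fsupp (g n) = {}" for n using fsupp_sub_ser_supp[of g n] by simp
    then have gz: "g = ser_zero" by (simp add: ser_zero_iff)
    have "\<sigma> ser_zero = 0" by (rule sigma_zero) (rule add)
    then show "\<sigma> g = 0" unfolding gz .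
  qed
next
  case (insert W F)
  have "\<forall>g\<in>A0 C (W \<union> \<Union>F). \<sigma> g = 0"
    by (rule good_union[OF add]) (use insert in auto)
  then show ?case by simp
qed

lemma vanish:
  fixes \<sigma> :: "(nat \<Rightarrow> 'm \<Rightarrow> complex) \<Rightarrow> complex fps"
  assumes add: "\<And>g h. g \<in> S \<Longrightarrow> h \<in> S \<Longrightarrow> \<sigma> (ser_add g h) = \<sigma> g + \<sigma> h"
    and agree: "\<And>g h n. g \<in> S \<Longrightarrow> h \<in> S \<Longrightarrow> (\<And>k. k \<le> n \<Longrightarrow> g k = h k) \<Longrightarrow>
                    fps_nth (\<sigma> g) n = fps_nth (\<sigma> h) n"
    and g: "g \<in> C0 C (- func_supp C \<sigma>)"
  shows "\<sigma> g = 0"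
proof (rule fps_ext)
  fix n
  define T where "T = trunc n g"
  have gS: "g \<in> S" using C0_S[OF g] .
  have TS: "T \<in> S" unfolding T_def by (rule trunc_C0[OF gS])
  have "fps_nth (\<sigma> g) n = fps_nth (\<sigma> T) n"
    by (rule agree[OF gS TS]) (simp add: T_def trunc_nth)
  define K where "K = (\<Union>k\<le>n. fsupp (g k))"
  have cK: "compact K" unfolding K_def by (rule compact_UN_fsupp) (rule C0_compact[OF g])
  define \<U> where "\<U> = {U. open U \<and> (\<forall>f\<in>C0 C U. \<sigma> f = 0)}"
  have "- func_supp C \<sigma> = \<Union>\<U>" by (simp add: func_supp_def \<U>_def)
  then have "fsupp (g k) \<subseteq> \<Union>\<U>" for k using C0_sub[OF g, of k] by simp
  then have KU: "K \<subseteq> \<Union>\<U>" unfolding K_def by blast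
  obtain F where F: "F \<subseteq> \<U>" "finite F" "K \<subseteq> \<Union>F"
    using compactE[OF cK KU] by (auto simp: \<U>_def)
  have good: "\<forall>g\<in>A0 C (\<Union>F). \<sigma> g = 0"
    by (rule good_Union[OF add F(2)]) (use F(1) in \<open>auto simp: \<U>_def intro: A0_C0\<close>)
  have fT: "fsupp (T k) \<subseteq> K" for k
    by (auto simp: T_def trunc_nth K_def)
  have TA: "T \<in> A0 C (\<Union>F)"
    unfolding A0_def C0_iff
  proof (intro CollectI conjI allI)
    show "T \<in> ser_in C" using TS by (rule C0_ser_in)
    fix k
    show "compact (fsupp (T k))" using C0_compact[OF TS] .
    show "fsupp (T k) \<subseteq> \<Union>F" using fT F(3) by blast
    have "ser_supp T \<subseteq> K" by (rule ser_supp_sub[OF compact_imp_closed[OF cK]]) (rule fT)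
    then show "ser_supp T \<subseteq> \<Union>F" using F(3) by blast
  qed
  have "\<sigma> T = 0" using good TA by blast
  then show "fps_nth (\<sigma> g) n = fps_nth 0 n" using \<open>fps_nth (\<sigma> g) n = fps_nth (\<sigma> T) n\<close> by simp
qed

lemma compact_bump:
  fixes K :: "'m set"
  assumes "compact K"
  obtains \<phi> V where "\<phi> \<in> C" "open V" "K \<subseteq> V" "\<And>x. x \<in> V \<Longrightarrow> \<phi> x = 1" "compact (fsupp \<phi>)"
proof -
  have H: "\<forall>x::'m. \<exists>U L. open U \<and> compact L \<and> x \<in> U \<and> U \<subseteq> L"
    by (rule ss[unfolded smooth_structure_def, THEN conjunct1])
  then have "\<exists>Uf. \<forall>x::'m. \<exists>L. open (Uf x) \<and> compact L \<and> x \<in> Uf x \<and> Uf x \<subseteq> L"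
    by (rule choice)
  then obtain Uf where U1: "\<forall>x::'m. \<exists>L. open (Uf x) \<and> compact L \<and> x \<in> Uf x \<and> Uf x \<subseteq> L"
    by (elim exE)
  then have "\<exists>Lf. \<forall>x::'m. open (Uf x) \<and> compact (Lf x) \<and> x \<in> Uf x \<and> Uf x \<subseteq> Lf x"
    by (rule choice)
  then obtain Lf where U2: "\<forall>x::'m. open (Uf x) \<and> compact (Lf x) \<and> x \<in> Uf x \<and> Uf x \<subseteq> Lf x"
    by (elim exE)
  have UL: "\<And>x. open (Uf x) \<and> compact (Lf x) \<and> x \<in> Uf x \<and> Uf x \<subseteq> Lf x"
    using U2 by (rule spec)
  have "K \<subseteq> (\<Union>x\<in>K. Uf x)" using UL by blast
  then obtain F where F: "F \<subseteq> K" "finite F" "K \<subseteq> (\<Union>x\<in>F. Uf x)"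
    using compactE_image[OF assms, of K Uf] UL by blast
  have oW: "open (\<Union>x\<in>F. Uf x)" using UL by blast
  have cL: "compact (\<Union>x\<in>F. Lf x)" using UL F(2) by (intro compact_UN) auto
  obtain \<phi> V where phi: "\<phi> \<in> C" "open V" "K \<subseteq> V" "\<And>x. x \<in> V \<Longrightarrow> \<phi> x = 1" "fsupp \<phi> \<subseteq> (\<Union>x\<in>F. Uf x)"
    using urysohn[OF compact_imp_closed[OF assms] oW F(3)] by blast
  have "fsupp \<phi> \<subseteq> (\<Union>x\<in>F. Lf x)" using phi(5) UL by blast
  then have "compact (fsupp \<phi>)" by (rule compact_sub[OF cL])
  then show ?thesis using that phi by blast
qed

lemma star_disj: "a \<in> ser_in C \<Longrightarrow> b \<in> ser_in C \<Longrightarrow> (\<And>s t. fsupp (a s) \<inter> fsupp (b t) = {}) \<Longrightarrow>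
   star Mr a b = ser_zero"
  unfolding star_def ser_zero_def by (simp add: Mr_disjoint ser_inD)

lemma star_zero_left: "b \<in> ser_in C \<Longrightarrow> star Mr ser_zero b = ser_zero"
  unfolding star_def ser_zero_def by (simp add: Mr_zero_left ser_inD)

lemma conj_zero: "ser_conj ser_zero = ser_zero"
  by (simp add: ser_conj_def ser_zero_def)

lemma func_supp_sub: "open W \<Longrightarrow> (\<forall>g\<in>C0 C W. \<sigma> g = 0) \<Longrightarrow> func_supp C \<sigma> \<subseteq> - W"
  unfolding func_supp_def by blast

lemma func_supp_closed: "closed (func_supp C \<sigma>)"
  unfolding func_supp_def by (intro closed_Compl open_Union) blast

lemma C0_mono: "U \<subseteq> U' \<Longrightarrow> f \<in> C0 C U \<Longrightarrow> f \<in> C0 C U'"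
  unfolding C0_iff by blast

lemma supp_vec_A0: "f \<in> C0 C U \<Longrightarrow> func_supp C (omega_vec Mr \<omega> f) \<subseteq> ser_supp f"
proof -
  assume f: "f \<in> C0 C U"
  have fi: "f \<in> ser_in C" using C0_ser_in[OF f] .
  have "func_supp C (omega_vec Mr \<omega> f) \<subseteq> - (- ser_supp f)"
  proof (rule func_supp_sub)
    show "open (- ser_supp f)" by (simp add: open_Compl ser_supp_closed)
    show "\<forall>g\<in>C0 C (- ser_supp f). omega_vec Mr \<omega> f g = 0"
    proof
      fix g assume g: "g \<in> C0 C (- ser_supp f)"
      have "star Mr (ser_conj f) g = ser_zero"
      proof (rule star_disj)
        show "ser_conj f \<in> ser_in C" by (rule conj_in[OF fi])
        show "g \<in> ser_in C" by (rule C0_ser_in[OF g])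
        fix s t
        show "fsupp (ser_conj f s) \<inter> fsupp (g t) = {}"
          using fsupp_sub_ser_supp[of f s] C0_sub[OF g, of t] by auto
      qed
      then show "omega_vec Mr \<omega> f g = 0"
        by (simp add: omega_vec_def star_zero_left fi om_zero)
    qed
  qed
  then show ?thesis by simp
qed

lemma psi_local: "f \<in> A0 C U \<Longrightarrow> psi C Mr \<omega> f \<in> gns_local C Mr \<omega> U"
proof -
  assume f: "f \<in> A0 C U"
  have fS: "f \<in> S" using C0_S[OF A0_C0[OF f]] .
  have "vec_supp C Mr \<omega> (psi C Mr \<omega> f) \<subseteq> U"
    unfolding vec_supp_psi[OF fS] using supp_vec_A0[OF A0_C0[OF f]] A0_supp[OF f] by blast
  then show ?thesis unfolding gns_local_def using psi_space[OF fS] by blast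
qed

lemma vec_add:
  assumes f: "f \<in> S" and g: "g \<in> S" and h: "h \<in> S"
  shows "omega_vec Mr \<omega> f (ser_add g h) = omega_vec Mr \<omega> f g + omega_vec Mr \<omega> f h"
proof -
  have i: "ser_conj f \<in> ser_in C" "f \<in> ser_in C" "g \<in> ser_in C" "h \<in> ser_in C"
    using f g h by (auto intro: C0_ser_in conj_in)
  have m: "star Mr (star Mr (ser_conj f) g) f \<in> S" "star Mr (star Mr (ser_conj f) h) f \<in> S"
    by (intro star_C0_right star_in i f)+
  show ?thesis unfolding omega_vec_def
    by (simp add: star_add_right star_add_left star_in i om_add m)
qed

lemma vec_agree:
  assumes f: "f \<in> S" and g: "g \<in> ser_in C" and h: "h \<in> ser_in C" and e: "\<And>k. k \<le> n \<Longrightarrow> g k = h k"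
  shows "fps_nth (omega_vec Mr \<omega> f g) n = fps_nth (omega_vec Mr \<omega> f h) n"
proof -
  have i: "ser_conj f \<in> ser_in C" "f \<in> ser_in C"
    using f by (auto intro: C0_ser_in conj_in)
  have e1: "star Mr (ser_conj f) g k = star Mr (ser_conj f) h k" if "k \<le> n" for k
    by (rule star_agree[OF _ _ that]) (auto simp: e)
  have e2: "star Mr (star Mr (ser_conj f) g) f k = star Mr (star Mr (ser_conj f) h) f k" if "k \<le> n" for k
    by (rule star_agree[OF _ _ that]) (auto simp: e1)
  show ?thesis unfolding omega_vec_def
    by (rule om_agree) (intro star_C0_right star_in i f g h, intro star_C0_right star_in i f g h, rule e2)
qed

lemma off_support:
  assumes f: "f \<in> S" and h: "h \<in> ser_in C" and V: "open V" "func_supp C (omega_vec Mr \<omega> f) \<subseteq> V"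
    and hV: "\<And>n. fsupp (h n) \<subseteq> - V"
  shows "omega_vec Mr \<omega> f h = 0"
proof (rule fps_ext)
  fix n
  have fi: "f \<in> ser_in C" "ser_conj f \<in> ser_in C" using f by (auto intro: C0_ser_in conj_in)
  define K where "K = (\<Union>t\<le>n. fsupp (f t))"
  have cK: "compact K" unfolding K_def by (rule compact_UN_fsupp) (rule C0_compact[OF f])
  obtain \<phi> V' where phi: "\<phi> \<in> C" "open V'" "K \<subseteq> V'" "\<And>x. x \<in> V' \<Longrightarrow> \<phi> x = 1" "compact (fsupp \<phi>)"
    using compact_bump[OF cK] by blast
  define h1 where "h1 = (\<lambda>k x. \<phi> x * h k x)"
  define h2 where "h2 = (\<lambda>k x. (1 - \<phi> x) * h k x)"
  have h1i: "h1 \<in> ser_in C" unfolding h1_def by (intro ser_inI C_mult phi(1) ser_inD[OF h])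
  have h2C: "h2 k \<in> C" for k unfolding h2_def by (intro C_mult C_one_minus phi(1) ser_inD[OF h])
  have hk: "h k = (\<lambda>x. h1 k x + h2 k x)" for k by (auto simp: h1_def h2_def fun_eq_iff algebra_simps)
  have fV: "fsupp (\<lambda>x. 1 - \<phi> x) \<subseteq> - V'"
    by (rule fsupp_subset_closed) (use phi(2,4) in \<open>auto simp: closed_Compl\<close>)
  have h2s: "fsupp (h2 k) \<subseteq> - V'" for k
    using fsupp_mult[of "\<lambda>x. 1 - \<phi> x" "h k"] fV unfolding h2_def by blast
  have loc: "Mr r (ser_conj f a) (h b) = Mr r (ser_conj f a) (h1 b)" if "a \<le> n" for r a b
  proof -
    have "fsupp (ser_conj f a) \<subseteq> K" using that by (auto simp: K_def)
    then have d: "fsupp (ser_conj f a) \<inter> fsupp (h2 b) = {}" using h2s[of b] phi(3) by blast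
    show ?thesis by (subst hk) (rule Mr_local_right[OF ser_inD[OF fi(2)] ser_inD[OF h1i] h2C d])
  qed
  have e1: "star Mr (ser_conj f) h k = star Mr (ser_conj f) h1 k" if "k \<le> n" for k
    unfolding star_nth
    using that by (intro ext sum.cong refl) (rule fun_cong[OF loc], simp)
  have e2: "fps_nth (omega_vec Mr \<omega> f h) n = fps_nth (omega_vec Mr \<omega> f h1) n"
  proof -
    have e2': "star Mr (star Mr (ser_conj f) h) f k = star Mr (star Mr (ser_conj f) h1) f k" if "k \<le> n" for k
      by (rule star_agree[OF _ _ that]) (auto simp: e1)
    show ?thesis unfolding omega_vec_def
      by (rule om_agree) (intro star_C0_right star_in fi f h h1i, intro star_C0_right star_in fi f h h1i, rule e2')
  qed
  have h1C0: "h1 \<in> C0 C (- func_supp C (omega_vec Mr \<omega> f))"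
    unfolding C0_iff
  proof (intro conjI allI h1i)
    fix k
    have s: "fsupp (h1 k) \<subseteq> fsupp \<phi> \<inter> fsupp (h k)" unfolding h1_def by (rule fsupp_mult)
    show "compact (fsupp (h1 k))" using s by (intro compact_sub[OF phi(5)]) blast
    show "fsupp (h1 k) \<subseteq> - func_supp C (omega_vec Mr \<omega> f)" using s hV[of k] V(2) by blast
  qed
  have "omega_vec Mr \<omega> f h1 = 0"
  proof (rule vanish[OF _ _ h1C0])
    show "\<And>g h. g \<in> S \<Longrightarrow> h \<in> S \<Longrightarrow> omega_vec Mr \<omega> f (ser_add g h) = omega_vec Mr \<omega> f g + omega_vec Mr \<omega> f h"
      by (rule vec_add[OF f])
    show "\<And>g h n. g \<in> S \<Longrightarrow> h \<in> S \<Longrightarrow> (\<And>k. k \<le> n \<Longrightarrow> g k = h k) \<Longrightarrow>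
         fps_nth (omega_vec Mr \<omega> f g) n = fps_nth (omega_vec Mr \<omega> f h) n"
      by (rule vec_agree[OF f]) (auto intro: C0_ser_in)
  qed
  then show "fps_nth (omega_vec Mr \<omega> f h) n = fps_nth 0 n" using e2 by simp
qed

lemma sum_only0:
  fixes G :: "nat \<Rightarrow> 'a::comm_monoid_add"
  shows "(\<And>s. s \<noteq> 0 \<Longrightarrow> G s = 0) \<Longrightarrow> (\<Sum>s\<le>m. G s) = G 0"
proof -
  assume z: "\<And>s. s \<noteq> 0 \<Longrightarrow> G s = 0"
  have "(\<Sum>s\<le>m. G s) = (\<Sum>s\<le>m. if s = 0 then G s else 0)" by (rule sum.cong) (auto simp: z)
  also have "\<dots> = G 0" by (subst sum.delta) auto
  finally show ?thesis .
qed

definition c0 :: "('m \<Rightarrow> complex) \<Rightarrow> (nat \<Rightarrow> 'm \<Rightarrow> complex)" where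
  "c0 h = (\<lambda>n. if n = 0 then h else (\<lambda>_. 0))"

lemma c0_in: "h \<in> C \<Longrightarrow> c0 h \<in> ser_in C"
  by (intro ser_inI) (simp add: c0_def C_zero)

lemma fsupp_c0: "fsupp (c0 h n) \<subseteq> fsupp h"
  by (simp add: c0_def)

lemma c0_add: "ser_add (c0 a) (c0 b) = c0 (\<lambda>x. a x + b x)"
  by (auto simp: c0_def ser_add_def fun_eq_iff)

lemma c0_conj: "ser_conj (c0 a) = c0 (\<lambda>x. cnj (a x))"
  by (auto simp: c0_def ser_conj_def fun_eq_iff)

lemma star_c0_one: "f \<in> ser_in C \<Longrightarrow> star Mr (c0 (\<lambda>_. 1)) f = f"
proof (intro ext)
  fix n x assume f: "f \<in> ser_in C"
  have inner: "(\<Sum>s\<le>n - r. Mr r (c0 (\<lambda>_. 1) s) (f (n - r - s)) x) = Mr r (\<lambda>_. 1) (f (n - r)) x" for r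
    by (subst sum_only0) (auto simp: c0_def Mr_zero_left ser_inD[OF f])
  have "star Mr (c0 (\<lambda>_. 1)) f n x = (\<Sum>r\<le>n. Mr r (\<lambda>_. 1) (f (n - r)) x)"
    unfolding star_nth by (simp only: inner)
  also have "\<dots> = Mr 0 (\<lambda>_. 1) (f n) x"
    by (subst sum_only0) (auto simp: Mr_one_left ser_inD[OF f])
  also have "\<dots> = f n x" by (simp add: Mr_0 C_const ser_inD[OF f])
  finally show "star Mr (c0 (\<lambda>_. 1)) f n x = f n x" .
qed

lemma surj_local:
  assumes U: "open U" and Psi: "\<Psi> \<in> gns_local C Mr \<omega> U"
  shows "\<exists>g\<in>A0 C U. \<Psi> = psi C Mr \<omega> g"
proof -
  have Ps: "\<Psi> \<in> gns_space C Mr \<omega>" and vs: "vec_supp C Mr \<omega> \<Psi> \<subseteq> U"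
    using Psi by (auto simp: gns_local_def)
  obtain f0 where f0: "f0 \<in> S" "\<Psi> = psi C Mr \<omega> f0" using space_psi[OF Ps] by blast
  define f where "f = rep \<Psi>"
  have R0: "(f0, f) \<in> R" unfolding f_def f0(2) by (rule rep_psi[OF f0(1)])
  have fS: "f \<in> S" using R0 by (simp add: R_iff)
  have fi: "f \<in> ser_in C" "ser_conj f \<in> ser_in C" using fS by (auto intro: C0_ser_in conj_in)
  have Pf: "\<Psi> = psi C Mr \<omega> f" unfolding f0(2) using psi_eq_iff[OF f0(1) fS] R0 by blast
  define A where "A = func_supp C (omega_vec Mr \<omega> f)"
  have AU: "A \<subseteq> U" using vs by (simp add: vec_supp_def A_def f_def)
  obtain ch V where chi: "ch \<in> C" "open V" "A \<subseteq> V" "\<And>x. x \<in> V \<Longrightarrow> ch x = 1" "fsupp ch \<subseteq> U"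
    using urysohn[OF func_supp_closed[of "omega_vec Mr \<omega> f", folded A_def] U AU] by blast
  define g where "g = star Mr (c0 ch) f"
  have gS: "g \<in> S" unfolding g_def by (rule star_C0_right[OF c0_in[OF chi(1)] fS])
  have gs: "fsupp (g n) \<subseteq> fsupp ch" for n
    using star_fsupp_left[OF c0_in[OF chi(1)] fi(1), of n] fsupp_c0[of ch] unfolding g_def by blast
  have gA: "g \<in> A0 C U"
    unfolding A0_def C0_iff
  proof (intro CollectI conjI allI)
    show "g \<in> ser_in C" by (rule C0_ser_in[OF gS])
    fix n
    show "compact (fsupp (g n))" by (rule C0_compact[OF gS])
    show "fsupp (g n) \<subseteq> U" using gs chi(5) by blast
    show "ser_supp g \<subseteq> U" using ser_supp_sub[OF fsupp_closed, of g ch] gs chi(5) by blast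
  qed
  define e0 where "e0 = c0 (\<lambda>x. 1 - ch x)"
  have e0i: "e0 \<in> ser_in C" "ser_conj e0 \<in> ser_in C" unfolding e0_def
    by (auto intro: c0_in conj_in C_one_minus chi(1))
  define e where "e = star Mr e0 f"
  have eS: "e \<in> S" unfolding e_def by (rule star_C0_right[OF e0i(1) fS])
  have "f = star Mr (c0 (\<lambda>_. 1)) f" by (rule star_c0_one[OF fi(1), symmetric])
  also have "c0 (\<lambda>_. 1) = ser_add e0 (c0 ch)" unfolding e0_def c0_add by simp
  also have "star Mr (ser_add e0 (c0 ch)) f = ser_add e g"
    unfolding e_def g_def by (rule star_add_left[OF e0i(1) c0_in[OF chi(1)] fi(1)])
  finally have fe: "f = ser_add e g" .
  have dfg: "ser_diff f g = e" by (subst fe) (simp add: ser_diff_def ser_add_def)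
  define h where "h = star Mr (ser_conj e0) e0"
  have hi: "h \<in> ser_in C" unfolding h_def by (rule star_in[OF e0i(2,1)])
  have "star Mr (ser_conj e) e = star Mr (star Mr (ser_conj f) (ser_conj e0)) (star Mr e0 f)"
    unfolding e_def by (simp add: star_conj e0i fi)
  also have "\<dots> = star Mr (star Mr (star Mr (ser_conj f) (ser_conj e0)) e0) f"
    by (rule star_assoc[symmetric]) (intro star_in fi e0i)+
  also have "\<dots> = star Mr (star Mr (ser_conj f) h) f"
    unfolding h_def by (subst star_assoc) (auto intro: fi e0i)
  finally have ee: "\<omega> (star Mr (ser_conj e) e) = omega_vec Mr \<omega> f h"
    by (simp add: omega_vec_def)
  have fV: "fsupp (\<lambda>x. 1 - ch x) \<subseteq> - V"
    by (rule fsupp_subset_closed) (use chi(2,4) in \<open>auto simp: closed_Compl\<close>)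
  have hV: "fsupp (h n) \<subseteq> - V" for n
  proof -
    have "fsupp (h n) \<subseteq> (\<Union>t\<le>n. fsupp (e0 t))" unfolding h_def by (rule star_fsupp_right[OF e0i(2,1)])
    also have "\<dots> \<subseteq> fsupp (\<lambda>x. 1 - ch x)" using fsupp_c0 unfolding e0_def by blast
    finally show ?thesis using fV by blast
  qed
  have "omega_vec Mr \<omega> f h = 0"
    by (rule off_support[OF fS hi chi(2) _ hV]) (use chi(3) in \<open>simp add: A_def\<close>)
  then have "e \<in> J" using eS ee by (simp add: J_iff)
  then have "(f, g) \<in> R" using fS gS dfg by (simp add: R_iff)
  then have "\<Psi> = psi C Mr \<omega> g" using Pf psi_eq_iff[OF fS gS] by simp
  then show ?thesis using gA by blast
qed

lemma A0_S: "f \<in> A0 C U \<Longrightarrow> f \<in> S" by (rule C0_S[OF A0_C0])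

lemma diff_A0: "f \<in> A0 C U \<Longrightarrow> g \<in> A0 C U \<Longrightarrow> ser_diff f g \<in> A0 C U"
proof -
  assume f: "f \<in> A0 C U" and g: "g \<in> A0 C U"
  have C: "ser_diff f g \<in> C0 C U" unfolding diff_eq by (intro add_C0 shz_C0 A0_C0 f g)
  have s: "fsupp (ser_diff f g n) \<subseteq> ser_supp f \<union> ser_supp g" for n
  proof -
    have "fsupp (ser_diff f g n) \<subseteq> fsupp (f n) \<union> fsupp (shz (-1) 0 g n)"
      unfolding diff_eq ser_add_def by (rule fsupp_add)
    also have "\<dots> \<subseteq> ser_supp f \<union> ser_supp g"
      using fsupp_shz[of "-1" 0 g n] fsupp_sub_ser_supp[of f n] fsupp_sub_ser_supp[of g n] by auto
    finally show ?thesis .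
  qed
  have "ser_supp (ser_diff f g) \<subseteq> ser_supp f \<union> ser_supp g"
    by (rule ser_supp_sub[OF closed_Un[OF ser_supp_closed ser_supp_closed]]) (rule s)
  then show ?thesis using C A0_supp[OF f] A0_supp[OF g] by (auto simp: A0_def)
qed

lemma loc_rel_iff: "(f, g) \<in> loc_rel C Mr \<omega> U \<longleftrightarrow> f \<in> A0 C U \<and> g \<in> A0 C U \<and> (f, g) \<in> R"
  by (auto simp: loc_rel_def R_iff diff_A0 A0_S)

lemma loc_equiv: "equiv (A0 C U) (loc_rel C Mr \<omega> U)"
proof (rule equivI)
  show "loc_rel C Mr \<omega> U \<subseteq> A0 C U \<times> A0 C U" by (auto simp: loc_rel_iff)
  show "refl_on (A0 C U) (loc_rel C Mr \<omega> U)"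
    using R_equiv unfolding refl_on_def equiv_def by (auto simp: loc_rel_iff A0_S)
  show "sym (loc_rel C Mr \<omega> U)"
    using R_sym unfolding sym_def by (auto simp: loc_rel_iff)
  show "trans (loc_rel C Mr \<omega> U)"
    using R_equiv unfolding trans_def equiv_def by (auto simp: loc_rel_iff)
qed

lemma rep_class:
  assumes eq: "equiv A r" and X: "X \<in> A // r"
  shows "rep X \<in> A \<and> X = r `` {rep X}"
proof -
  obtain x where x: "X = r `` {x}" "x \<in> A" using X by (rule quotientE)
  have "x \<in> X" unfolding x(1) by (rule equiv_class_self[OF eq x(2)])
  then have "rep X \<in> X" unfolding rep_def by (rule someI[where P="\<lambda>y. y \<in> X"])
  then have xr: "(x, rep X) \<in> r" by (simp add: x(1))
  then have "rep X \<in> A" using eq unfolding equiv_def by blast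
  moreover have "X = r `` {rep X}" using x(1) equiv_class_eq[OF eq xr] by (rule trans)
  ultimately show ?thesis by (rule conjI)
qed

lemma main:
  assumes "open U" and "open V"
  shows "(\<exists>\<Phi>. bij_betw \<Phi> (loc_quot C Mr \<omega> U) (gns_local C Mr \<omega> U) \<and>
            (\<forall>f\<in>A0 C U. \<Phi> (loc_rel C Mr \<omega> U `` {f}) = psi C Mr \<omega> f) \<and>
            (\<forall>X\<in>loc_quot C Mr \<omega> U. \<forall>Y\<in>loc_quot C Mr \<omega> U.
               gns_inner Mr \<omega> (\<Phi> X) (\<Phi> Y) = loc_inner Mr \<omega> X Y))
       \<and> (U \<inter> V = {} \<longrightarrow>
            (\<forall>\<Psi>\<in>gns_local C Mr \<omega> U. \<forall>\<Phi>\<in>gns_local C Mr \<omega> V. gns_inner Mr \<omega> \<Psi> \<Phi> = 0))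
       \<and> (U \<inter> func_supp C \<omega> = {} \<longrightarrow> gns_local C Mr \<omega> U = {psi C Mr \<omega> ser_zero})"
proof (intro conjI impI)
  let ?L = "loc_rel C Mr \<omega> U"
  let ?Q = "loc_quot C Mr \<omega> U"
  let ?P = "\<lambda>X. psi C Mr \<omega> (rep X)"
  have rc: "rep X \<in> A0 C U \<and> X = ?L `` {rep X}" if "X \<in> ?Q" for X
    using rep_class[OF loc_equiv that[unfolded loc_quot_def]] .
  have bij: "bij_betw ?P ?Q (gns_local C Mr \<omega> U)"
    unfolding bij_betw_def
  proof
    show "inj_on ?P ?Q"
    proof (rule inj_onI)
      fix X Y assume X: "X \<in> ?Q" and Y: "Y \<in> ?Q" and e: "?P X = ?P Y"
      have "(rep X, rep Y) \<in> R" using e psi_eq_iff[OF A0_S A0_S] rc[OF X] rc[OF Y] by blast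
      then have "(rep X, rep Y) \<in> ?L" using rc[OF X] rc[OF Y] by (simp add: loc_rel_iff)
      then have "?L `` {rep X} = ?L `` {rep Y}" by (rule equiv_class_eq[OF loc_equiv])
      then show "X = Y" using rc[OF X] rc[OF Y] by simp
    qed
    show "?P ` ?Q = gns_local C Mr \<omega> U"
    proof
      show "?P ` ?Q \<subseteq> gns_local C Mr \<omega> U" using rc psi_local by blast
      show "gns_local C Mr \<omega> U \<subseteq> ?P ` ?Q"
      proof
        fix \<Psi> assume "\<Psi> \<in> gns_local C Mr \<omega> U"
        then obtain g where g: "g \<in> A0 C U" "\<Psi> = psi C Mr \<omega> g" using surj_local[OF assms(1)] by blast
        define X where "X = ?L `` {g}"
        have XQ: "X \<in> ?Q" unfolding X_def loc_quot_def by (rule quotientI[OF g(1)])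
        have "g \<in> X" unfolding X_def by (rule equiv_class_self[OF loc_equiv g(1)])
        have e: "X = ?L `` {rep X}" using rc[OF XQ] by (rule conjunct2)
        from \<open>g \<in> X\<close> have "g \<in> ?L `` {rep X}" by (subst (asm) e)
        then have "(rep X, g) \<in> ?L" by simp
        then have "(g, rep X) \<in> R" by (simp add: loc_rel_iff R_sym)
        then have "\<Psi> = ?P X" using g psi_eq_iff[OF A0_S[OF g(1)] A0_S] rc[OF XQ] by blast
        then show "\<Psi> \<in> ?P ` ?Q" using XQ by blast
      qed
    qed
  qed
  have cls: "?P (?L `` {f}) = psi C Mr \<omega> f" if f: "f \<in> A0 C U" for f
  proof -
    have XQ: "?L `` {f} \<in> ?Q" unfolding loc_quot_def by (rule quotientI[OF f])
    have "f \<in> ?L `` {f}" by (rule equiv_class_self[OF loc_equiv f])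
    have e: "?L `` {f} = ?L `` {rep (?L `` {f})}" using rc[OF XQ] by (rule conjunct2)
    from \<open>f \<in> ?L `` {f}\<close> have "f \<in> ?L `` {rep (?L `` {f})}" by (subst (asm) e)
    then have "(rep (?L `` {f}), f) \<in> ?L" by simp
    then have "(f, rep (?L `` {f})) \<in> R" by (simp add: loc_rel_iff R_sym)
    then show ?thesis using psi_eq_iff[OF A0_S[OF f] A0_S] rc[OF XQ] by metis
  qed
  have inn: "gns_inner Mr \<omega> (?P X) (?P Y) = loc_inner Mr \<omega> X Y" if "X \<in> ?Q" "Y \<in> ?Q" for X Y
  proof -
    have a: "rep X \<in> A0 C U" "rep Y \<in> A0 C U" using rc[OF that(1)] rc[OF that(2)] by blast+
    show ?thesis unfolding loc_inner_def by (rule gns_inner_psi[OF A0_S[OF a(1)] A0_S[OF a(2)]])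
  qed
  show "\<exists>\<Phi>. bij_betw \<Phi> ?Q (gns_local C Mr \<omega> U) \<and>
            (\<forall>f\<in>A0 C U. \<Phi> (?L `` {f}) = psi C Mr \<omega> f) \<and>
            (\<forall>X\<in>?Q. \<forall>Y\<in>?Q. gns_inner Mr \<omega> (\<Phi> X) (\<Phi> Y) = loc_inner Mr \<omega> X Y)"
    using bij cls inn by blast
next
  assume UV: "U \<inter> V = {}"
  show "\<forall>\<Psi>\<in>gns_local C Mr \<omega> U. \<forall>\<Phi>\<in>gns_local C Mr \<omega> V. gns_inner Mr \<omega> \<Psi> \<Phi> = 0"
  proof (intro ballI)
    fix \<Psi> \<Phi> assume "\<Psi> \<in> gns_local C Mr \<omega> U" "\<Phi> \<in> gns_local C Mr \<omega> V"
    then obtain f g where f: "f \<in> A0 C U" "\<Psi> = psi C Mr \<omega> f" and g: "g \<in> A0 C V" "\<Phi> = psi C Mr \<omega> g"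
      using surj_local assms by metis
    have "star Mr (ser_conj f) g = ser_zero"
    proof (rule star_disj)
      show "ser_conj f \<in> ser_in C" by (rule conj_in[OF C0_ser_in[OF A0_C0[OF f(1)]]])
      show "g \<in> ser_in C" by (rule C0_ser_in[OF A0_C0[OF g(1)]])
      fix s t
      show "fsupp (ser_conj f s) \<inter> fsupp (g t) = {}"
      proof -
        have "fsupp (f s) \<subseteq> U" using fsupp_sub_ser_supp[of f s] A0_supp[OF f(1)] by (rule order_trans)
        moreover have "fsupp (g t) \<subseteq> V" using fsupp_sub_ser_supp[of g t] A0_supp[OF g(1)] by (rule order_trans)
        ultimately show ?thesis using UV by auto
      qed
    qed
    then show "gns_inner Mr \<omega> \<Psi> \<Phi> = 0"
      unfolding f(2) g(2) gns_inner_psi[OF A0_S[OF f(1)] A0_S[OF g(1)]] by (simp add: om_zero)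
  qed
next
  assume Uw: "U \<inter> func_supp C \<omega> = {}"
  show "gns_local C Mr \<omega> U = {psi C Mr \<omega> ser_zero}"
  proof
    show "gns_local C Mr \<omega> U \<subseteq> {psi C Mr \<omega> ser_zero}"
    proof
      fix \<Psi> assume "\<Psi> \<in> gns_local C Mr \<omega> U"
      then obtain g where g: "g \<in> A0 C U" "\<Psi> = psi C Mr \<omega> g" using surj_local[OF assms(1)] by blast
      have gS: "g \<in> S" by (rule A0_S[OF g(1)])
      have "star Mr (ser_conj g) g \<in> C0 C U"
        by (rule star_C0_right[OF conj_in[OF C0_ser_in[OF A0_C0[OF g(1)]]] A0_C0[OF g(1)]])
      then have m: "star Mr (ser_conj g) g \<in> C0 C (- func_supp C \<omega>)"
        by (rule C0_mono[rotated]) (use Uw in blast)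
      have "\<omega> (star Mr (ser_conj g) g) = 0"
      proof (rule vanish[OF _ _ m])
        show "\<And>g h. g \<in> S \<Longrightarrow> h \<in> S \<Longrightarrow> \<omega> (ser_add g h) = \<omega> g + \<omega> h" by (rule om_add)
        show "\<And>g h n. g \<in> S \<Longrightarrow> h \<in> S \<Longrightarrow> (\<And>k. k \<le> n \<Longrightarrow> g k = h k) \<Longrightarrow>
            fps_nth (\<omega> g) n = fps_nth (\<omega> h) n" by (rule om_agree)
      qed
      then have "g \<in> J" using gS by (simp add: J_iff)
      moreover have "ser_diff g ser_zero = g" by (simp add: ser_diff_def ser_zero_def)
      ultimately have "(g, ser_zero) \<in> R" using gS zero_C0 by (simp add: R_iff)
      then have "\<Psi> = psi C Mr \<omega> ser_zero" using g(2) psi_eq_iff[OF gS zero_C0] by simp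
      then show "\<Psi> \<in> {psi C Mr \<omega> ser_zero}" by simp
    qed
    have z: "omega_vec Mr \<omega> ser_zero h = 0" if "h \<in> ser_in C" for h
      by (simp add: omega_vec_def conj_zero star_zero_left that zero_in om_zero)
    have "func_supp C (omega_vec Mr \<omega> ser_zero) \<subseteq> - UNIV"
      by (rule func_supp_sub) (auto simp: z C0_ser_in)
    then have "vec_supp C Mr \<omega> (psi C Mr \<omega> ser_zero) \<subseteq> U"
      by (simp add: vec_supp_psi zero_C0)
    then show "{psi C Mr \<omega> ser_zero} \<subseteq> gns_local C Mr \<omega> U"
      by (simp add: gns_local_def psi_space zero_C0)
  qed
qed

end

theorem proposition2:
  fixes C :: "('m::t2_space \<Rightarrow> complex) set"
    and pb :: "('m \<Rightarrow> complex) \<Rightarrow> ('m \<Rightarrow> complex) \<Rightarrow> ('m \<Rightarrow> complex)"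
    and Mr :: "nat \<Rightarrow> ('m \<Rightarrow> complex) \<Rightarrow> ('m \<Rightarrow> complex) \<Rightarrow> ('m \<Rightarrow> complex)"
    and \<omega> :: "(nat \<Rightarrow> 'm \<Rightarrow> complex) \<Rightarrow> complex fps"
    and U V :: "'m set"
  assumes "smooth_structure C"
    and "poisson_bracket C pb"
    and "star_product C pb Mr"
    and "lambda_linear C \<omega>"
    and "positive_functional C Mr \<omega>"
    and "open U" and "open V"
  shows "(\<exists>\<Phi>. bij_betw \<Phi> (loc_quot C Mr \<omega> U) (gns_local C Mr \<omega> U) \<and>
            (\<forall>f\<in>A0 C U. \<Phi> (loc_rel C Mr \<omega> U `` {f}) = psi C Mr \<omega> f) \<and>
            (\<forall>X\<in>loc_quot C Mr \<omega> U. \<forall>Y\<in>loc_quot C Mr \<omega> U.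
               gns_inner Mr \<omega> (\<Phi> X) (\<Phi> Y) = loc_inner Mr \<omega> X Y))
       \<and> (U \<inter> V = {} \<longrightarrow>
            (\<forall>\<Psi>\<in>gns_local C Mr \<omega> U. \<forall>\<Phi>\<in>gns_local C Mr \<omega> V. gns_inner Mr \<omega> \<Psi> \<Phi> = 0))
       \<and> (U \<inter> func_supp C \<omega> = {} \<longrightarrow> gns_local C Mr \<omega> U = {psi C Mr \<omega> ser_zero})"
proof -
  interpret G: gns_ctx C pb Mr \<omega>
    by (rule gns_ctx.intro) (fact assms)+
  show ?thesis by (rule G.main) (fact assms)+
qed

end
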